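(* Let $\rho>0$, consider Algorithm 2 (described in the context) with parameters $\hat\sigma,\theta,\hat\theta,\eta,\tau,\lambda_1$, let $d_0$ be the distance from $x_0$ to the solution set $(F+N_C)^{-1}(0)$, and let $\sigma:=\frac{2\hat\theta}{\eta L}$ (so $0<\sigma<1$). Then: (a) Algorithm 2 finds $y\in\mathcal H$ and $\nu\in N_C(y)$ with $\|F(y)+\nu\|\le\rho$ in at most $$\left\lceil\Big(\frac{2}{\tau\eta(1-\sigma)}\Big)\frac{d_0^2}{\rho}\right\rceil+\left\lceil\frac{1}{2\tau}\log^+\Big(\frac{\eta+2\hat\theta/L}{\lambda_1^2\rho}\Big)\right\rceil$$ iterations; (b) Algorithm 2 finds a triple $(y,v,\varepsilon)\in\mathcal H\times\mathcal H\times\mathbb R_+$ with $v\in(F+N_C)^\varepsilon(y)$ and $\max\{\|v\|,\varepsilon\}\le\rho$ in at most $$\max\left\{\left\lceil\Big(\frac{2\sqrt[3]{4}}{\tau\eta^{2/3}(1-\sigma^2)^{1/3}}\Big)\Big(\frac{d_0^2}{\rho}\Big)^{2/3}\right\rceil,\left\lceil\Big(\frac{2\sqrt[3]{4}}{\tau\eta^{2/3}(1-\sigma^2)^{2/3}}\Big)\Big(\frac{d_0^3}{\rho}\Big)^{2/3}\right\rceil\right\}+\left\lceil\frac{1}{2\tau}\log^+\Big(\frac{\eta+2\hat\theta/L}{\lambda_1^2\rho}\Big)\right\rceil$$ iterations.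
   Context: Setting: $\mathcal H$ real Hilbert space; $C\subseteq\mathcal H$ nonempty closed convex; $N_C(x)=\{\nu:\langle\nu,y-x\rangle\le0\ \forall y\in C\}$ if $x\in C$, $N_C(x)=\emptyset$ otherwise. $F:C\to\mathcal H$ is monotone, continuously differentiable, and $\|F'(x)-F'(y)\|\le L\|x-y\|$ for all $x,y\in C$, with $L>0$; the set $(F+N_C)^{-1}(0)$ of $x$ with $0\in F(x)+N_C(x)$ is nonempty. For $y\in C$, $F_y(x):=F(y)+F'(y)(x-y)$. For set-valued $T$ and $\varepsilon\ge0$, $T^\varepsilon(x)=\{v:\langle v-u,x-z\rangle\ge-\varepsilon\ \forall z,\ \forall u\in T(z)\}$. $\log^+(t)=\max\{\log t,0\}$. Parameters: $0\le\hat\sigma<1/2$; $0<\theta<(1-\hat\sigma)(1-2\hat\sigma)$; $\hat\theta:=\theta\big(\frac{\hat\sigma}{1-\hat\sigma}+\frac{\theta}{(1-\hat\sigma)^2}\big)$; $\eta>2\hat\theta/L$; $\tau:=\dfrac{2(\theta-\hat\theta)}{2\theta+\frac{\eta L}{2}+\sqrt{(2\theta+\frac{\eta L}{2})^2-4\theta(\theta-\hat\theta)}}$ (one has $0<\tau<1$). Algorithm 2: input $x_0\in C$, $y_0:=x_0$, $\nu_0:=0$, $\lambda_1>0$ with $\lambda_1^2\|F(y_0)\|\le2\theta/L$. For $k=1,2,\dots$: if $F(y_{k-1})+\nu_{k-1}=0$, stop and return $y_{k-1}$. If $\frac{\lambda_kL}{2}\|\lambda_k(F(y_{k-1})+\nu_{k-1})+y_{k-1}-x_{k-1}\|\le\hat\theta$,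 set $y_k=y_{k-1}$, $\nu_k=\nu_{k-1}$; otherwise find any $(y_k,\nu_k)$ with $\nu_k\in N_C(y_k)$ and $\|\lambda_k(F_{y_{k-1}}(y_k)+\nu_k)+y_k-x_{k-1}\|\le\hat\sigma\|y_k-y_{k-1}\|$. Then, if $\lambda_k\|y_k-x_{k-1}\|\ge\eta$, set $x_k=x_{k-1}-\tau\lambda_k(F(y_k)+\nu_k)$ and $\lambda_{k+1}=(1-\tau)\lambda_k$; else set $x_k=x_{k-1}$ and $\lambda_{k+1}=\lambda_k/(1-\tau)$. Standing assumption: the algorithm never stops at the first test, i.e. $F(y_{k-1})+\nu_{k-1}\neq0$ for all $k$. "Finds within $M$ iterations" means that a pair/triple with the stated property is available among the quantities computed in the first $M$ iterations (the pairs $(y_k,\nu_k)$, or weighted ergodic averages of $y_k$ and $F(y_k)+\nu_k$ with weights $\lambda_k$ over the iterations with $\lambda_k\|y_k-x_{k-1}\|\ge\eta$, with $\varepsilon$ the corresponding weighted average of $\langle y_k-\bar y,F(y_k)+\nu_k-\bar v\rangle$). *)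

theory Defs
  imports "HOL-Analysis.Analysis"
begin

definition normal_cone :: "'a::real_inner set \<Rightarrow> 'a \<Rightarrow> 'a set" where
  "normal_cone C x = (if x \<in> C then {\<nu>. \<forall>y\<in>C. inner \<nu> (y - x) \<le> 0} else {})"

definition FN_op :: "('a::real_inner \<Rightarrow> 'a) \<Rightarrow> 'a set \<Rightarrow> 'a \<Rightarrow> 'a set" where
  "FN_op F C x = (\<lambda>\<nu>. F x + \<nu>) ` normal_cone C x"

definition enlargement :: "('a::real_inner \<Rightarrow> 'a set) \<Rightarrow> real \<Rightarrow> 'a \<Rightarrow> 'a set" where
  "enlargement T \<epsilon> x = {v. \<forall>z. \<forall>u\<in>T z. inner (v - u) (x - z) \<ge> - \<epsilon>}"

definition sol_set :: "('a::real_inner \<Rightarrow> 'a) \<Rightarrow> 'a set \<Rightarrow> 'a set" where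
  "sol_set F C = {x. 0 \<in> FN_op F C x}"

definition log_plus :: "real \<Rightarrow> real" where
  "log_plus t = max (ln t) 0"

definition theta_hat :: "real \<Rightarrow> real \<Rightarrow> real" where
  "theta_hat \<sigma>h \<theta> = \<theta> * (\<sigma>h / (1 - \<sigma>h) + \<theta> / (1 - \<sigma>h)^2)"

definition tau_param :: "real \<Rightarrow> real \<Rightarrow> real \<Rightarrow> real \<Rightarrow> real" where
  "tau_param \<sigma>h \<theta> \<eta> L =
     (let th = theta_hat \<sigma>h \<theta>; b = 2 * \<theta> + \<eta> * L / 2 in
      2 * (\<theta> - th) / (b + sqrt (b^2 - 4 * \<theta> * (\<theta> - th))))"

text \<open>A run of Algorithm 2 (with all nondeterministic choices), together with the
  standing assumption that the algorithm never stops at its first test.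
  Indices: x 0 = x_0, y 0 = y_0, \<nu> 0 = \<nu>_0; lam k = \<lambda>_k for k \<ge> 1 (lam 0 unused).\<close>
definition alg2_run ::
  "('a::real_inner \<Rightarrow> 'a) \<Rightarrow> ('a \<Rightarrow> 'a \<Rightarrow>\<^sub>L 'a) \<Rightarrow> 'a set \<Rightarrow> real \<Rightarrow> real \<Rightarrow> real \<Rightarrow> real \<Rightarrow>
   (nat \<Rightarrow> 'a) \<Rightarrow> (nat \<Rightarrow> 'a) \<Rightarrow> (nat \<Rightarrow> 'a) \<Rightarrow> (nat \<Rightarrow> real) \<Rightarrow> bool" where
  "alg2_run F F' C L \<sigma>h \<theta> \<eta> x y \<nu> lam \<longleftrightarrow>
     (let th = theta_hat \<sigma>h \<theta>; \<tau> = tau_param \<sigma>h \<theta> \<eta> L in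
     x 0 \<in> C \<and> y 0 = x 0 \<and> \<nu> 0 = 0 \<and> lam 1 > 0 \<and> (lam 1)^2 * norm (F (y 0)) \<le> 2 * \<theta> / L \<and>
     (\<forall>k. F (y k) + \<nu> k \<noteq> 0) \<and>
     (\<forall>k\<ge>1.
        (if lam k * L / 2 * norm (lam k *\<^sub>R (F (y (k-1)) + \<nu> (k-1)) + y (k-1) - x (k-1)) \<le> th
         then y k = y (k-1) \<and> \<nu> k = \<nu> (k-1)
         else \<nu> k \<in> normal_cone C (y k) \<and>
              norm (lam k *\<^sub>R (F (y (k-1)) + blinfun_apply (F' (y (k-1))) (y k - y (k-1)) + \<nu> k)
                    + y k - x (k-1)) \<le> \<sigma>h * norm (y k - y (k-1))) \<and>
        (if lam k * norm (y k - x (k-1)) \<ge> \<eta>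
         then x k = x (k-1) - (\<tau> * lam k) *\<^sub>R (F (y k) + \<nu> k) \<and> lam (k+1) = (1 - \<tau>) * lam k
         else x k = x (k-1) \<and> lam (k+1) = lam k / (1 - \<tau>))))"

definition good_steps :: "real \<Rightarrow> (nat \<Rightarrow> 'a::real_normed_vector) \<Rightarrow> (nat \<Rightarrow> 'a) \<Rightarrow> (nat \<Rightarrow> real) \<Rightarrow> nat \<Rightarrow> nat set" where
  "good_steps \<eta> x y lam k = {j \<in> {1..k}. lam j * norm (y j - x (j-1)) \<ge> \<eta>}"

definition erg_y :: "real \<Rightarrow> (nat \<Rightarrow> 'a::real_normed_vector) \<Rightarrow> (nat \<Rightarrow> 'a) \<Rightarrow> (nat \<Rightarrow> real) \<Rightarrow> nat \<Rightarrow> 'a" where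
  "erg_y \<eta> x y lam k =
     (1 / (\<Sum>j\<in>good_steps \<eta> x y lam k. lam j)) *\<^sub>R (\<Sum>j\<in>good_steps \<eta> x y lam k. lam j *\<^sub>R y j)"

definition erg_v :: "('a::real_normed_vector \<Rightarrow> 'a) \<Rightarrow> real \<Rightarrow> (nat \<Rightarrow> 'a) \<Rightarrow> (nat \<Rightarrow> 'a) \<Rightarrow> (nat \<Rightarrow> 'a) \<Rightarrow> (nat \<Rightarrow> real) \<Rightarrow> nat \<Rightarrow> 'a" where
  "erg_v F \<eta> x y \<nu> lam k =
     (1 / (\<Sum>j\<in>good_steps \<eta> x y lam k. lam j)) *\<^sub>R
       (\<Sum>j\<in>good_steps \<eta> x y lam k. lam j *\<^sub>R (F (y j) + \<nu> j))"

definition erg_eps :: "('a::real_inner \<Rightarrow> 'a) \<Rightarrow> real \<Rightarrow> (nat \<Rightarrow> 'a) \<Rightarrow> (nat \<Rightarrow> 'a) \<Rightarrow> (nat \<Rightarrow> 'a) \<Rightarrow> (nat \<Rightarrow> real) \<Rightarrow> nat \<Rightarrow> real" where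
  "erg_eps F \<eta> x y \<nu> lam k =
     (1 / (\<Sum>j\<in>good_steps \<eta> x y lam k. lam j)) *
       (\<Sum>j\<in>good_steps \<eta> x y lam k. lam j *
          inner (y j - erg_y \<eta> x y lam k) (F (y j) + \<nu> j - erg_v F \<eta> x y \<nu> lam k))"

end

theory Submission
  imports Defs
begin



lemma tau_props:
  fixes sh th eta L :: real
  assumes sh: "0 \<le> sh" "sh < 1/2" and th: "0 < th" "th < (1 - sh) * (1 - 2 * sh)"
    and L: "L > 0" and eta: "eta > 0"
  shows "0 < theta_hat sh th" "theta_hat sh th < th"
    "0 < tau_param sh th eta L" "tau_param sh th eta L < 1"
    "th * (1 - tau_param sh th eta L)^2 = theta_hat sh th + tau_param sh th eta L * eta * L / 2"
proof -
  have s1: "1 - sh > 0" using sh by simp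
  show p1: "0 < theta_hat sh th" unfolding theta_hat_def using sh th s1 by (simp add: add_nonneg_pos)
  have "sh / (1 - sh) + th / (1 - sh)^2 < sh / (1 - sh) + (1 - sh) * (1 - 2 * sh) / (1 - sh)^2"
    using th s1 by (simp add: divide_strict_right_mono)
  also have "\<dots> = sh / (1 - sh) + (1 - 2 * sh) / (1 - sh)" using s1 by (simp add: power2_eq_square)
  also have "\<dots> = 1" using s1 by (simp add: add_divide_distrib[symmetric])
  finally show p2: "theta_hat sh th < th" unfolding theta_hat_def using th by simp
  define t where "t = theta_hat sh th"
  define b where "b = 2 * th + eta * L / 2"
  define c where "c = th - t"
  define D where "D = b^2 - 4 * th * c"
  have c0: "c > 0" using p2 by (simp add: c_def t_def)
  have cth: "c < th" using p1 by (simp add: c_def t_def)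
  have b0: "b > 2 * th" using eta L by (simp add: b_def)
  have bb: "b^2 > (2*th)^2" using b0 th by (intro power_strict_mono) auto
  have cc: "4 * th * c < 4 * th * th" using cth th by simp
  have D0: "D > 0" unfolding D_def using bb cc by (simp add: power2_eq_square)
  define s where "s = sqrt D"
  have s0: "s > 0" "s^2 = D" using D0 by (auto simp: s_def)
  have tau: "tau_param sh th eta L = 2 * c / (b + s)"
    unfolding tau_param_def Let_def s_def D_def c_def t_def b_def by simp
  show "0 < tau_param sh th eta L" using tau c0 s0 b0 th by simp
  have "2 * c < b + s" using c0 s0 b0 cth by linarith
  then show "tau_param sh th eta L < 1" using tau c0 s0 b0 th by simp
  define tt where "tt = tau_param sh th eta L"
  have bs: "b + s > 0" using s0 b0 th by simp
  have eq: "tt * (b + s) = 2 * c" using tau bs by (simp add: tt_def)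
  have "(th * tt^2 - b * tt + c) * (b+s)^2 = th * (tt * (b+s))^2 - b * (tt * (b+s)) * (b+s) + c * (b+s)^2"
    by (simp add: algebra_simps power2_eq_square)
  also have "\<dots> = c * (4 * th * c - b^2 + s^2)" unfolding eq by (simp add: algebra_simps power2_eq_square)
  also have "\<dots> = 0" using s0 by (simp add: D_def)
  finally have "th * tt^2 - b * tt + c = 0" using bs by simp
  then have "th * tt^2 = b * tt - c" by simp
  then show "th * (1 - tt)^2 = theta_hat sh th + tt * eta * L / 2"
    unfolding power2_diff b_def c_def t_def by (simp add: algebra_simps)
qed




lemma seg_in:
  assumes "convex C" "p \<in> C" "q \<in> C" "0 \<le> t" "t \<le> 1"
  shows "p + t *\<^sub>R (q - p) \<in> C"
proof -
  have "(1 - t) *\<^sub>R p + t *\<^sub>R q \<in> C" using assms unfolding convex_alt by blast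
  moreover have "(1 - t) *\<^sub>R p + t *\<^sub>R q = p + t *\<^sub>R (q - p)" by (simp add: algebra_simps)
  ultimately show ?thesis by simp
qed

lemma taylor_bound:
  fixes F :: "'a::real_normed_vector \<Rightarrow> 'a" and F' :: "'a \<Rightarrow> 'a \<Rightarrow>\<^sub>L 'a"
  assumes C: "convex C" and pC: "p \<in> C" and qC: "q \<in> C"
    and D: "\<forall>u\<in>C. (F has_derivative blinfun_apply (F' u)) (at u within C)"
    and Lip: "\<forall>u\<in>C. \<forall>w\<in>C. norm (F' u - F' w) \<le> L * norm (u - w)"
  shows "norm (F q - F p - F' p (q - p)) \<le> L / 2 * norm (q - p)^2"
proof -
  define d where "d = q - p"
  define g where "g = (\<lambda>t::real. p + t *\<^sub>R d)"
  define f where "f = (\<lambda>t. F (g t) - t *\<^sub>R F' p d)"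
  define \<phi> where "\<phi> = (\<lambda>t::real. L / 2 * t^2 * norm d ^ 2)"
  have gC: "g t \<in> C" if "0 \<le> t" "t \<le> 1" for t
    using seg_in[OF C pC qC that] by (simp add: g_def d_def)
  have Fc: "continuous_on C F"
    using D has_derivative_continuous continuous_on_eq_continuous_within by blast
  have gcont: "continuous_on {0..1} g" unfolding g_def by (intro continuous_intros)
  have fc: "continuous_on {0..1} f" unfolding f_def
    by (intro continuous_intros continuous_on_compose2[OF Fc gcont]) (auto intro: gC)
  have phic: "continuous_on {0..1} \<phi>" unfolding \<phi>_def by (intro continuous_intros)
  have fd: "(f has_vector_derivative (F' (g t) d - F' p d)) (at t)" if t: "0 < t" "t < 1" for t
  proof -
    have g_im: "g ` {0<..<1} \<subseteq> C" using gC by auto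
    have gd: "(g has_derivative (\<lambda>h. h *\<^sub>R d)) (at t within {0<..<1})"
      unfolding g_def by (auto intro!: derivative_eq_intros)
    have "((\<lambda>t. F (g t)) has_derivative (\<lambda>h. F' (g t) (h *\<^sub>R d))) (at t within {0<..<1})"
      using has_derivative_in_compose2[of C F "\<lambda>u. blinfun_apply (F' u)", OF _ g_im _ gd] D t by auto
    then have "((\<lambda>t. F (g t)) has_derivative (\<lambda>h. F' (g t) (h *\<^sub>R d))) (at t)"
      using at_within_open[of t "{0<..<1}"] t by auto
    then have "((\<lambda>t. F (g t)) has_derivative (\<lambda>h. h *\<^sub>R F' (g t) d)) (at t)"
      by (simp add: blinfun.scaleR_right)
    then have "((\<lambda>t. F (g t) - t *\<^sub>R F' p d) has_derivative (\<lambda>h. h *\<^sub>R F' (g t) d - h *\<^sub>R F' p d)) (at t)"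
      by (auto intro!: derivative_eq_intros)
    then show ?thesis unfolding f_def has_vector_derivative_def by (simp add: algebra_simps)
  qed
  have phid: "(\<phi> has_vector_derivative (L * t * norm d ^ 2)) (at t)" for t
    unfolding \<phi>_def has_vector_derivative_def
    by (auto intro!: derivative_eq_intros simp: algebra_simps)
  have bnd: "norm (F' (g t) d - F' p d) \<le> L * t * norm d ^ 2" if t: "0 < t" "t < 1" for t
  proof -
    have "norm (F' (g t) d - F' p d) = norm ((F' (g t) - F' p) d)" by (simp add: blinfun.diff_left)
    also have "\<dots> \<le> norm (F' (g t) - F' p) * norm d" by (rule norm_blinfun)
    also have "\<dots> \<le> L * norm (g t - p) * norm d"
      using Lip gC[of t] t pC by (intro mult_right_mono) auto
    also have "\<dots> = L * t * norm d ^ 2" using t by (simp add: g_def power2_eq_square)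
    finally show ?thesis .
  qed
  have "norm (f 1 - f 0) \<le> \<phi> 1 - \<phi> 0"
    by (rule differentiable_bound_general[OF zero_less_one fc phic fd phid bnd])
  then show ?thesis by (simp add: f_def g_def \<phi>_def d_def algebra_simps)
qed

lemma deriv_mono_dir:
  fixes F :: "'a::real_inner \<Rightarrow> 'a" and F' :: "'a \<Rightarrow> 'a \<Rightarrow>\<^sub>L 'a"
  assumes C: "convex C" and pC: "p \<in> C" and qC: "q \<in> C"
    and D: "\<forall>u\<in>C. (F has_derivative blinfun_apply (F' u)) (at u within C)"
    and Lip: "\<forall>u\<in>C. \<forall>w\<in>C. norm (F' u - F' w) \<le> L * norm (u - w)"
    and mono: "\<forall>u\<in>C. \<forall>w\<in>C. inner (F u - F w) (u - w) \<ge> 0"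
  shows "inner (F' p (q - p)) (q - p) \<ge> 0"
proof (rule ccontr)
  define d where "d = q - p"
  define a where "a = inner (F' p d) d"
  assume "\<not> ?thesis"
  then have a0: "a < 0" by (simp add: a_def d_def)
  define K where "K = \<bar>L\<bar> / 2 * norm d ^ 3 + 1"
  have K0: "K > 0" unfolding K_def by (simp add: add_nonneg_pos)
  define t where "t = min 1 (- a / (2 * K))"
  have t0: "0 < t" "t \<le> 1" using a0 K0 by (auto simp: t_def divide_neg_pos)
  have "t \<le> - a / (2 * K)" by (simp add: t_def)
  then have "t * K \<le> (- a / (2 * K)) * K" using K0 by (intro mult_right_mono) auto
  also have "\<dots> = - a / 2" using K0 by simp
  finally have tK: "t * K < - a" using a0 by linarith
  define qt where "qt = p + t *\<^sub>R d"
  have qtC: "qt \<in> C" using seg_in[OF C pC qC] t0 by (simp add: qt_def d_def)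
  have m: "inner (F qt - F p) (qt - p) \<ge> 0" using mono qtC pC by blast
  define R where "R = F qt - F p - F' p (qt - p)"
  have Rb: "norm R \<le> L / 2 * norm (qt - p)^2"
    unfolding R_def by (rule taylor_bound[OF C pC qtC D Lip])
  have qp: "qt - p = t *\<^sub>R d" by (simp add: qt_def)
  have "F qt - F p = t *\<^sub>R F' p d + R" by (simp add: R_def qp blinfun.scaleR_right)
  then have "0 \<le> inner (t *\<^sub>R F' p d + R) (t *\<^sub>R d)" using m qp by simp
  also have "\<dots> = t^2 * a + t * inner R d" by (simp add: a_def inner_add_left power2_eq_square algebra_simps)
  also have "\<dots> \<le> t^2 * a + t * (norm R * norm d)"
    using t0 by (intro add_left_mono mult_left_mono) (auto simp: norm_cauchy_schwarz)
  also have "\<dots> \<le> t^2 * a + t * ((\<bar>L\<bar> / 2 * (t^2 * norm d ^2)) * norm d)"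
  proof -
    have "norm R \<le> \<bar>L\<bar> / 2 * (t^2 * norm d^2)"
    proof -
      have "norm (qt - p)^2 = t^2 * norm d^2" using qp t0 by (simp add: power_mult_distrib)
      moreover have "L / 2 * (t^2 * norm d^2) \<le> \<bar>L\<bar> / 2 * (t^2 * norm d^2)"
        by (intro mult_right_mono) auto
      ultimately show ?thesis using Rb by simp
    qed
    then show ?thesis using t0 by (intro add_left_mono mult_left_mono mult_right_mono) auto
  qed
  also have "\<dots> = t^2 * (a + t * (\<bar>L\<bar> / 2 * norm d ^3))" by (simp add: algebra_simps power2_eq_square power3_eq_cube)
  finally have "0 \<le> a + t * (\<bar>L\<bar> / 2 * norm d ^3)" using t0 by (simp add: zero_le_mult_iff)
  moreover have "t * (\<bar>L\<bar> / 2 * norm d ^3) \<le> t * K" using t0 by (simp add: K_def)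
  ultimately show False using tK by linarith
qed




lemma nc_mem: "\<nu> \<in> normal_cone C z \<Longrightarrow> z \<in> C \<and> (\<forall>w\<in>C. inner \<nu> (w - z) \<le> 0)"
  unfolding normal_cone_def by (auto split: if_splits)

lemma nc_mono:
  assumes "\<nu>1 \<in> normal_cone C z1" "\<nu>2 \<in> normal_cone C z2"
  shows "inner (\<nu>1 - \<nu>2) (z1 - z2) \<ge> 0"
proof -
  have a: "inner \<nu>1 (z2 - z1) \<le> 0" using nc_mem[OF assms(1)] nc_mem[OF assms(2)] by blast
  have b: "inner \<nu>2 (z1 - z2) \<le> 0" using nc_mem[OF assms(1)] nc_mem[OF assms(2)] by blast
  have "inner (\<nu>1 - \<nu>2) (z1 - z2) = - inner \<nu>1 (z2 - z1) - inner \<nu>2 (z1 - z2)"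
    by (simp add: inner_diff_left inner_diff_right)
  then show ?thesis using a b by linarith
qed

lemma sub_step:
  fixes F :: "'a::real_inner \<Rightarrow> 'a" and F' :: "'a \<Rightarrow> 'a \<Rightarrow>\<^sub>L 'a"
  assumes C: "convex C"
    and D: "\<forall>u\<in>C. (F has_derivative blinfun_apply (F' u)) (at u within C)"
    and Lip: "\<forall>u\<in>C. \<forall>w\<in>C. norm (F' u - F' w) \<le> L * norm (u - w)"
    and mono: "\<forall>u\<in>C. \<forall>w\<in>C. inner (F u - F w) (u - w) \<ge> 0"
    and n1: "\<nu>' \<in> normal_cone C y'" and n2: "\<nu> \<in> normal_cone C yk"
    and lam: "lamk > 0" and L: "L > 0" and sh: "0 \<le> \<sigma>h" "\<sigma>h < 1" and th: "\<theta> \<ge> 0"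
    and hw: "lamk * L / 2 * norm (lamk *\<^sub>R (F y' + \<nu>') + y' - xp) \<le> \<theta>"
    and he: "norm (lamk *\<^sub>R (F y' + F' y' (yk - y') + \<nu>) + yk - xp) \<le> \<sigma>h * norm (yk - y')"
  shows "lamk * L / 2 * norm (lamk *\<^sub>R (F yk + \<nu>) + yk - xp) \<le> theta_hat \<sigma>h \<theta>"
proof -
  have y'C: "y' \<in> C" using nc_mem[OF n1] by blast
  have ykC: "yk \<in> C" using nc_mem[OF n2] by blast
  define w where "w = lamk *\<^sub>R (F y' + \<nu>') + y' - xp"
  define e where "e = lamk *\<^sub>R (F y' + F' y' (yk - y') + \<nu>) + yk - xp"
  define \<delta> where "\<delta> = norm (yk - y')"
  have wm: "w - e = lamk *\<^sub>R (\<nu>' - \<nu>) + lamk *\<^sub>R F' y' (y' - yk) + (y' - yk)"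
    unfolding w_def e_def by (simp add: algebra_simps blinfun.diff_right)
  have m1: "inner (\<nu>' - \<nu>) (y' - yk) \<ge> 0" by (rule nc_mono[OF n1 n2])
  have m2: "inner (F' y' (y' - yk)) (y' - yk) \<ge> 0"
  proof -
    have "inner (F' y' (yk - y')) (yk - y') \<ge> 0" by (rule deriv_mono_dir[OF C y'C ykC D Lip mono])
    moreover have "F' y' (y' - yk) = - F' y' (yk - y')" by (metis blinfun.minus_right minus_diff_eq)
    ultimately show ?thesis by (metis inner_minus_left inner_minus_right minus_diff_eq minus_minus)
  qed
  have "inner (w - e) (y' - yk) = lamk * inner (\<nu>' - \<nu>) (y' - yk) + lamk * inner (F' y' (y' - yk)) (y' - yk) + \<delta>^2"
    unfolding wm \<delta>_def by (simp add: inner_add_left power2_norm_eq_inner norm_minus_commute)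
  then have "\<delta>^2 \<le> inner (w - e) (y' - yk)" using m1 m2 lam by (smt (verit) mult_nonneg_nonneg)
  also have "\<dots> \<le> norm (w - e) * \<delta>" unfolding \<delta>_def
    by (metis norm_cauchy_schwarz norm_minus_commute)
  also have "\<dots> \<le> (norm w + norm e) * \<delta>" unfolding \<delta>_def by (intro mult_right_mono norm_triangle_ineq4) auto
  finally have dd: "\<delta>^2 \<le> (norm w + norm e) * \<delta>" .
  have "\<delta> \<le> norm w + norm e"
  proof (cases "\<delta> = 0")
    case False
    then have "\<delta> > 0" by (simp add: \<delta>_def)
    then show ?thesis using dd by (simp add: power2_eq_square)
  qed simp
  also have "\<dots> \<le> norm w + \<sigma>h * \<delta>" using he unfolding e_def \<delta>_def by simp
  finally have d1: "(1 - \<sigma>h) * \<delta> \<le> norm w" by (simp add: algebra_simps)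
  define m where "m = lamk * L / 2 * \<delta>"
  have m0: "m \<ge> 0" using lam L by (simp add: m_def \<delta>_def)
  have mb: "m \<le> \<theta> / (1 - \<sigma>h)"
  proof -
    have "(1 - \<sigma>h) * m = lamk * L / 2 * ((1 - \<sigma>h) * \<delta>)" by (simp add: m_def algebra_simps)
    also have "\<dots> \<le> lamk * L / 2 * norm w" using d1 lam L by (intro mult_left_mono) auto
    also have "\<dots> \<le> \<theta>" using hw by (simp add: w_def)
    finally show ?thesis using sh by (simp add: field_simps)
  qed
  define R where "R = F yk - F y' - F' y' (yk - y')"
  have Rb: "norm R \<le> L / 2 * \<delta>^2" unfolding R_def \<delta>_def by (rule taylor_bound[OF C y'C ykC D Lip])
  have req: "lamk *\<^sub>R (F yk + \<nu>) + yk - xp = e + lamk *\<^sub>R R"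
    unfolding e_def R_def by (simp add: algebra_simps)
  have "norm (lamk *\<^sub>R (F yk + \<nu>) + yk - xp) \<le> norm e + lamk * norm R"
    unfolding req using lam by (metis abs_of_pos norm_scaleR norm_triangle_ineq)
  also have "\<dots> \<le> \<sigma>h * \<delta> + lamk * (L / 2 * \<delta>^2)"
    using he Rb lam unfolding e_def \<delta>_def by (intro add_mono mult_left_mono) auto
  finally have rb: "norm (lamk *\<^sub>R (F yk + \<nu>) + yk - xp) \<le> \<sigma>h * \<delta> + lamk * (L / 2 * \<delta>^2)" .
  have "lamk * L / 2 * norm (lamk *\<^sub>R (F yk + \<nu>) + yk - xp) \<le> lamk * L / 2 * (\<sigma>h * \<delta> + lamk * (L / 2 * \<delta>^2))"
    using rb lam L by (intro mult_left_mono) auto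
  also have "\<dots> = \<sigma>h * m + m^2" by (simp add: m_def power2_eq_square algebra_simps)
  also have "\<dots> \<le> \<sigma>h * (\<theta> / (1 - \<sigma>h)) + (\<theta> / (1 - \<sigma>h))^2"
    using mb m0 sh by (intro add_mono mult_left_mono power_mono) auto
  also have "\<dots> = theta_hat \<sigma>h \<theta>" unfolding theta_hat_def by (simp add: algebra_simps power2_eq_square)
  finally show ?thesis .
qed




locale alg2 =
  fixes F :: "'a::{real_inner, complete_space} \<Rightarrow> 'a" and F' :: "'a \<Rightarrow> 'a \<Rightarrow>\<^sub>L 'a" and C :: "'a set"
    and L \<sigma>h \<theta> \<eta> :: real and x y \<nu> :: "nat \<Rightarrow> 'a" and lam :: "nat \<Rightarrow> real"
  assumes C_convex: "convex C"
    and F_mono: "\<forall>u\<in>C. \<forall>w\<in>C. inner (F u - F w) (u - w) \<ge> 0"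
    and F_deriv: "\<forall>u\<in>C. (F has_derivative blinfun_apply (F' u)) (at u within C)"
    and L_pos: "L > 0"
    and F'_lip: "\<forall>u\<in>C. \<forall>w\<in>C. norm (F' u - F' w) \<le> L * norm (u - w)"
    and sh: "0 \<le> \<sigma>h" "\<sigma>h < 1/2"
    and th: "0 < \<theta>" "\<theta> < (1 - \<sigma>h) * (1 - 2 * \<sigma>h)"
    and eta: "\<eta> > 2 * theta_hat \<sigma>h \<theta> / L"
    and run: "alg2_run F F' C L \<sigma>h \<theta> \<eta> x y \<nu> lam"
begin

abbreviation "tq \<equiv> theta_hat \<sigma>h \<theta>"
abbreviation "tau \<equiv> tau_param \<sigma>h \<theta> \<eta> L"
abbreviation "sg \<equiv> 2 * tq / (\<eta> * L)"
abbreviation v where "v k \<equiv> F (y k) + \<nu> k"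

lemma tq_pos: "0 < tq" and tq_lt: "tq < \<theta>" and eta_pos: "\<eta> > 0"
  and tau_pos: "0 < tau" and tau_lt: "tau < 1" and tau_eq: "\<theta> * (1 - tau)^2 = tq + tau * \<eta> * L / 2"
proof -
  show tq: "0 < tq" using tau_props(1)[OF sh th L_pos zero_less_one] by simp
  show "tq < \<theta>" using tau_props(2)[OF sh th L_pos zero_less_one] by simp
  have "2 * tq / L > 0" using tq L_pos by simp
  then show ep: "\<eta> > 0" using eta by linarith
  show "0 < tau" "tau < 1" "\<theta> * (1 - tau)^2 = tq + tau * \<eta> * L / 2"
    using tau_props[OF sh th L_pos ep] by auto
qed

lemma sg_pos: "0 < sg" and sg_lt: "sg < 1"
proof -
  show "0 < sg" using tq_pos eta_pos L_pos by simp
  have "2 * tq < \<eta> * L" using eta L_pos by (simp add: field_simps)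
  then show "sg < 1" using eta_pos L_pos by simp
qed

lemma run0: "x 0 \<in> C" "y 0 = x 0" "\<nu> 0 = 0" "lam 1 > 0" "(lam 1)^2 * norm (F (y 0)) \<le> 2 * \<theta> / L"
  "\<And>k. v k \<noteq> 0"
  using run unfolding alg2_run_def Let_def by auto

lemma run_step: "(if lam (Suc n) * L / 2 * norm (lam (Suc n) *\<^sub>R v n + y n - x n) \<le> tq
         then y (Suc n) = y n \<and> \<nu> (Suc n) = \<nu> n
         else \<nu> (Suc n) \<in> normal_cone C (y (Suc n)) \<and>
              norm (lam (Suc n) *\<^sub>R (F (y n) + blinfun_apply (F' (y n)) (y (Suc n) - y n) + \<nu> (Suc n))
                    + y (Suc n) - x n) \<le> \<sigma>h * norm (y (Suc n) - y n)) \<and>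
        (if lam (Suc n) * norm (y (Suc n) - x n) \<ge> \<eta>
         then x (Suc n) = x n - (tau * lam (Suc n)) *\<^sub>R v (Suc n) \<and> lam (Suc (Suc n)) = (1 - tau) * lam (Suc n)
         else x (Suc n) = x n \<and> lam (Suc (Suc n)) = lam (Suc n) / (1 - tau))"
proof -
  have "\<forall>k\<ge>1.
        (if lam k * L / 2 * norm (lam k *\<^sub>R (F (y (k-1)) + \<nu> (k-1)) + y (k-1) - x (k-1)) \<le> tq
         then y k = y (k-1) \<and> \<nu> k = \<nu> (k-1)
         else \<nu> k \<in> normal_cone C (y k) \<and>
              norm (lam k *\<^sub>R (F (y (k-1)) + blinfun_apply (F' (y (k-1))) (y k - y (k-1)) + \<nu> k)
                    + y k - x (k-1)) \<le> \<sigma>h * norm (y k - y (k-1))) \<and>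
        (if lam k * norm (y k - x (k-1)) \<ge> \<eta>
         then x k = x (k-1) - (tau * lam k) *\<^sub>R (F (y k) + \<nu> k) \<and> lam (k+1) = (1 - tau) * lam k
         else x k = x (k-1) \<and> lam (k+1) = lam k / (1 - tau))"
    using run unfolding alg2_run_def Let_def by blast
  moreover have h: "1 \<le> Suc n" by simp
  ultimately have "(\<lambda>k. (if lam k * L / 2 * norm (lam k *\<^sub>R (F (y (k-1)) + \<nu> (k-1)) + y (k-1) - x (k-1)) \<le> tq
         then y k = y (k-1) \<and> \<nu> k = \<nu> (k-1)
         else \<nu> k \<in> normal_cone C (y k) \<and>
              norm (lam k *\<^sub>R (F (y (k-1)) + blinfun_apply (F' (y (k-1))) (y k - y (k-1)) + \<nu> k)
                    + y k - x (k-1)) \<le> \<sigma>h * norm (y k - y (k-1))) \<and>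
        (if lam k * norm (y k - x (k-1)) \<ge> \<eta>
         then x k = x (k-1) - (tau * lam k) *\<^sub>R (F (y k) + \<nu> k) \<and> lam (k+1) = (1 - tau) * lam k
         else x k = x (k-1) \<and> lam (k+1) = lam k / (1 - tau))) (Suc n)" by blast
  then show ?thesis by (simp only: diff_Suc_1 Suc_eq_plus1[symmetric])
qed

definition inv where
  "inv n \<longleftrightarrow> lam (Suc n) > 0 \<and> \<nu> n \<in> normal_cone C (y n) \<and>
     lam (Suc n) * L / 2 * norm (lam (Suc n) *\<^sub>R v n + y n - x n) \<le> \<theta>"

lemma res_of_inv:
  assumes "inv n"
  shows "\<nu> (Suc n) \<in> normal_cone C (y (Suc n)) \<and>
         lam (Suc n) * L / 2 * norm (lam (Suc n) *\<^sub>R v (Suc n) + y (Suc n) - x n) \<le> tq"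
proof (cases "lam (Suc n) * L / 2 * norm (lam (Suc n) *\<^sub>R v n + y n - x n) \<le> tq")
  case True
  then have "y (Suc n) = y n" "\<nu> (Suc n) = \<nu> n" using run_step[of n] by auto
  then show ?thesis using True assms unfolding inv_def by simp
next
  case False
  then have a: "\<nu> (Suc n) \<in> normal_cone C (y (Suc n))"
    "norm (lam (Suc n) *\<^sub>R (F (y n) + blinfun_apply (F' (y n)) (y (Suc n) - y n) + \<nu> (Suc n))
                    + y (Suc n) - x n) \<le> \<sigma>h * norm (y (Suc n) - y n)"
    using run_step[of n] by auto
  have "lam (Suc n) * L / 2 * norm (lam (Suc n) *\<^sub>R (F (y (Suc n)) + \<nu> (Suc n)) + y (Suc n) - x n) \<le> tq"
    apply (rule sub_step[OF C_convex F_deriv F'_lip F_mono _ a(1) _ L_pos _ _ _ _ a(2)])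
    using assms sh th unfolding inv_def by auto
  then show ?thesis using a by simp
qed

lemma inv_all: "inv n"
proof (induction n)
  case 0
  have "lam 1 * L / 2 * norm (lam 1 *\<^sub>R v 0 + y 0 - x 0) = (lam 1)^2 * norm (F (y 0)) * L / 2"
    using run0 by (simp add: power2_eq_square)
  also have "\<dots> \<le> (2 * \<theta> / L) * L / 2" using run0(5) L_pos by (intro divide_right_mono mult_right_mono) auto
  also have "\<dots> = \<theta>" using L_pos by simp
  finally show ?case unfolding inv_def using run0 by (simp add: normal_cone_def)
next
  case (Suc n)
  note r = res_of_inv[OF Suc]
  have lp: "lam (Suc n) > 0" using Suc unfolding inv_def by simp
  define l where "l = lam (Suc n)"
  define r where "r = l *\<^sub>R v (Suc n) + y (Suc n) - x n"
  have rb: "l * L / 2 * norm r \<le> tq" using r by (simp add: l_def r_def)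
  show ?case
  proof (cases "l * norm (y (Suc n) - x n) \<ge> \<eta>")
    case True
    then have xs: "x (Suc n) = x n - (tau * l) *\<^sub>R v (Suc n)" and ls: "lam (Suc (Suc n)) = (1 - tau) * l"
      using run_step[of n] by (auto simp: l_def)
    have req: "lam (Suc (Suc n)) *\<^sub>R v (Suc n) + y (Suc n) - x (Suc n) = r"
      unfolding xs ls r_def by (simp add: algebra_simps)
    have "lam (Suc (Suc n)) * L / 2 * norm (lam (Suc (Suc n)) *\<^sub>R v (Suc n) + y (Suc n) - x (Suc n))
       = (1 - tau) * (l * L / 2 * norm r)" unfolding req unfolding ls by simp
    also have "\<dots> \<le> 1 * (l * L / 2 * norm r)"
      using tau_pos tau_lt lp L_pos by (intro mult_right_mono) (auto simp: l_def)
    also have "\<dots> \<le> \<theta>" using rb tq_lt by simp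
    finally have fin: "lam (Suc (Suc n)) * L / 2 * norm (lam (Suc (Suc n)) *\<^sub>R v (Suc n) + y (Suc n) - x (Suc n)) \<le> \<theta>" .
    have "lam (Suc (Suc n)) > 0" unfolding ls using tau_lt lp by (simp add: l_def)
    then show ?thesis unfolding inv_def using r fin by simp
  next
    case False
    then have xs: "x (Suc n) = x n" and ls: "lam (Suc (Suc n)) = l / (1 - tau)"
      using run_step[of n] by (auto simp: l_def)
    define e where "e = y (Suc n) - x n"
    have t1: "1 - tau > 0" using tau_lt by simp
    have weq: "lam (Suc (Suc n)) *\<^sub>R v (Suc n) + y (Suc n) - x (Suc n) = (1 / (1 - tau)) *\<^sub>R (r - tau *\<^sub>R e)"
    proof -
      have "r - tau *\<^sub>R e = l *\<^sub>R v (Suc n) + (1 - tau) *\<^sub>R e" by (simp add: r_def e_def algebra_simps)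
      then have "(1 / (1 - tau)) *\<^sub>R (r - tau *\<^sub>R e) = (l / (1 - tau)) *\<^sub>R v (Suc n) + e"
        using t1 by (simp add: scaleR_add_right)
      then show ?thesis unfolding xs ls e_def by (simp add: algebra_simps)
    qed
    have "norm (r - tau *\<^sub>R e) \<le> norm r + tau * norm e" using tau_pos
      by (metis abs_of_pos norm_scaleR norm_triangle_ineq4)
    then have nb: "norm (lam (Suc (Suc n)) *\<^sub>R v (Suc n) + y (Suc n) - x (Suc n)) \<le> (norm r + tau * norm e) / (1 - tau)"
      unfolding weq using t1 by (simp add: divide_right_mono)
    have "lam (Suc (Suc n)) * L / 2 * norm (lam (Suc (Suc n)) *\<^sub>R v (Suc n) + y (Suc n) - x (Suc n))
        \<le> (l / (1 - tau)) * L / 2 * ((norm r + tau * norm e) / (1 - tau))"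
      unfolding ls using nb[unfolded ls] lp L_pos t1 by (intro mult_left_mono) (auto simp: l_def)
    also have "\<dots> = (l * L / 2 * norm r + tau * L / 2 * (l * norm e)) / (1 - tau)^2"
      using t1 by (simp add: power2_eq_square field_simps)
    also have "\<dots> \<le> (tq + tau * L / 2 * \<eta>) / (1 - tau)^2"
      using rb False t1 tau_pos L_pos by (intro divide_right_mono add_mono mult_left_mono) (auto simp: e_def)
    also have "\<dots> = \<theta>" using tau_eq t1 by (simp add: field_simps)
    finally show ?thesis unfolding inv_def using r lp t1 ls by (simp add: l_def)
  qed
qed

lemma res: "\<nu> (Suc n) \<in> normal_cone C (y (Suc n))"
  "lam (Suc n) * L / 2 * norm (lam (Suc n) *\<^sub>R v (Suc n) + y (Suc n) - x n) \<le> tq"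
  using res_of_inv[OF inv_all] by auto

lemma lam_pos: "lam (Suc n) > 0" using inv_all unfolding inv_def by simp
lemma nu_nc: "\<nu> n \<in> normal_cone C (y n)" using inv_all unfolding inv_def by simp
lemma yC: "y n \<in> C" using nc_mem[OF nu_nc] by simp

end



lemma hpe_identity:
  fixes xp yk vk p r E :: "'a::real_inner"
  assumes r: "r = l *\<^sub>R vk + yk - xp" and E: "E = xp - yk"
  shows "norm (xp - (t * l) *\<^sub>R vk - p)^2 = norm (xp - p)^2 - 2 * t * l * inner (yk - p) vk
           + t * (norm r ^2 - norm E ^2) - t * (1 - t) * norm (r + E)^2"
proof -
  have lv: "l *\<^sub>R vk = r + E" using r E by simp
  define a where "a = yk - p"
  have xp: "xp - p = E + a" using E by (simp add: a_def)
  have xn: "xp - (t * l) *\<^sub>R vk - p = E + a - t *\<^sub>R (r + E)"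
  proof -
    have "(t * l) *\<^sub>R vk = t *\<^sub>R (r + E)" using lv by (metis scaleR_scaleR)
    moreover have "xp - (t * l) *\<^sub>R vk - p = (xp - p) - (t * l) *\<^sub>R vk" by simp
    ultimately show ?thesis using xp by simp
  qed
  have iv: "l * inner a vk = inner a (r + E)" using lv by (metis inner_scaleR_right)
  define u where "u = r + E"
  have n1: "norm (E + a - t *\<^sub>R u)^2 = norm (E + a)^2 - 2 * t * inner (E + a) u + t^2 * norm u ^2"
    unfolding power2_norm_eq_inner by (simp add: inner_diff_left inner_diff_right inner_commute power2_eq_square algebra_simps)
  have n2: "inner (E + a) u = inner E r + norm E^2 + l * inner a vk"
    unfolding iv u_def by (simp add: inner_add_left inner_add_right power2_norm_eq_inner)
  have n3: "norm u^2 = norm r^2 + 2 * inner E r + norm E^2"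
    unfolding u_def by (simp add: power2_norm_eq_inner inner_add_left inner_add_right inner_commute)
  show ?thesis unfolding xn xp a_def[symmetric] u_def[symmetric] n1 n2 n3
    by (simp add: algebra_simps power2_eq_square)
qed

lemma hpe_ineq:
  fixes xp yk vk p :: "'a::real_inner"
  assumes err: "norm (l *\<^sub>R vk + yk - xp) \<le> s * norm (yk - xp)" and t: "0 \<le> t" "t \<le> 1"
  shows "norm (xp - (t * l) *\<^sub>R vk - p)^2 \<le> norm (xp - p)^2 - 2 * t * l * inner (yk - p) vk
           - t * (1 - s^2) * norm (yk - xp)^2"
proof -
  define r where "r = l *\<^sub>R vk + yk - xp"
  define E where "E = xp - yk"
  have nE: "norm E = norm (yk - xp)" by (simp add: E_def norm_minus_commute)
  have "norm r ^2 \<le> (s * norm E)^2" using err nE unfolding r_def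
    by (metis norm_ge_zero power_mono)
  then have rr: "norm r ^2 - norm E ^2 \<le> - (1 - s^2) * norm E^2" by (simp add: power_mult_distrib algebra_simps)
  have "t * (norm r ^2 - norm E ^2) - t * (1 - t) * norm (r + E)^2 \<le> t * (- (1 - s^2) * norm E^2) - 0"
    using rr t by (intro diff_mono mult_left_mono) auto
  then show ?thesis using hpe_identity[OF r_def E_def, of t p] nE by (simp add: algebra_simps)
qed

lemma hpe_kappa:
  fixes xp yk vk s0 :: "'a::real_inner"
  assumes err: "norm (l *\<^sub>R vk + yk - xp) \<le> s * norm (yk - xp)" and l: "l > 0"
    and m: "inner vk (yk - s0) \<ge> 0" and s: "0 \<le> s"
  shows "(1 - s^2) * norm (yk - s0)^2 \<le> norm (xp - s0)^2"
proof -
  define r where "r = l *\<^sub>R vk + yk - xp"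
  define E where "E = xp - yk"
  define w where "w = yk - s0"
  have lv: "l *\<^sub>R vk = r + E" by (simp add: r_def E_def)
  have "inner (r + E) w \<ge> 0" using m l unfolding lv[symmetric] w_def by simp
  then have "inner E w \<ge> - inner r w" by (simp add: inner_add_left)
  moreover have "inner r w \<le> norm r * norm w" by (simp add: norm_cauchy_schwarz)
  moreover have "norm r \<le> s * norm E" using err by (simp add: r_def E_def norm_minus_commute)
  ultimately have iE: "inner E w \<ge> - (s * norm E * norm w)"
    by (smt (verit) mult_right_mono norm_ge_zero)
  have "norm (xp - s0)^2 = norm (w + E)^2" by (simp add: w_def E_def)
  also have "\<dots> = norm w^2 + 2 * inner E w + norm E^2"
    by (simp add: power2_norm_eq_inner inner_add_left inner_add_right inner_commute)
  also have "\<dots> \<ge> norm w^2 - 2 * (s * norm E * norm w) + norm E^2" using iE by simp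
  finally have h: "norm w^2 - 2 * (s * norm E * norm w) + norm E^2 \<le> norm (xp - s0)^2" .
  have "(1 - s^2) * norm w^2 = norm w^2 - 2 * (s * norm E * norm w) + norm E^2 - (norm E - s * norm w)^2"
    by (simp add: power2_eq_square algebra_simps)
  also have "\<dots> \<le> norm w^2 - 2 * (s * norm E * norm w) + norm E^2" by simp
  finally show ?thesis using h by (simp add: w_def)
qed

context alg2 begin

abbreviation good where "good n \<equiv> lam (Suc n) * norm (y (Suc n) - x n) \<ge> \<eta>"

lemma x_good: "good n \<Longrightarrow> x (Suc n) = x n - (tau * lam (Suc n)) *\<^sub>R v (Suc n) \<and> lam (Suc (Suc n)) = (1 - tau) * lam (Suc n)"
  using run_step[of n] by auto
lemma x_bad: "\<not> good n \<Longrightarrow> x (Suc n) = x n \<and> lam (Suc (Suc n)) = lam (Suc n) / (1 - tau)"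
  using run_step[of n] by auto

lemma hpe_err: assumes "good n"
  shows "norm (lam (Suc n) *\<^sub>R v (Suc n) + y (Suc n) - x n) \<le> sg * norm (y (Suc n) - x n)"
proof -
  define l where "l = lam (Suc n)"
  define e where "e = norm (y (Suc n) - x n)"
  define r where "r = norm (lam (Suc n) *\<^sub>R v (Suc n) + y (Suc n) - x n)"
  have l0: "l > 0" using lam_pos by (simp add: l_def)
  have h1: "l * L / 2 * r \<le> tq" using res(2)[of n] by (simp add: l_def r_def)
  have h2: "l * e \<ge> \<eta>" using assms by (simp add: l_def e_def)
  have "r * (\<eta> * L) \<le> r * ((l * e) * L)"
    using h2 l0 L_pos by (intro mult_left_mono) (auto simp: r_def)
  also have "\<dots> = 2 * e * (l * L / 2 * r)" by (simp add: algebra_simps)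
  also have "\<dots> \<le> 2 * e * tq" using h1 by (intro mult_left_mono) (auto simp: e_def)
  finally have "r * (\<eta> * L) \<le> 2 * e * tq" .
  then have "r \<le> 2 * e * tq / (\<eta> * L)" using eta_pos L_pos by (simp add: pos_le_divide_eq)
  then have "r \<le> sg * e" by (simp add: algebra_simps)
  then show ?thesis by (simp add: r_def e_def)
qed

lemma T_mono:
  assumes "\<nu>1 \<in> normal_cone C z1" "\<nu>2 \<in> normal_cone C z2"
  shows "inner ((F z1 + \<nu>1) - (F z2 + \<nu>2)) (z1 - z2) \<ge> 0"
proof -
  have "z1 \<in> C" "z2 \<in> C" using nc_mem assms by blast+
  then have "inner (F z1 - F z2) (z1 - z2) \<ge> 0" using F_mono by blast
  moreover have "inner (\<nu>1 - \<nu>2) (z1 - z2) \<ge> 0" by (rule nc_mono[OF assms])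
  ultimately show ?thesis by (simp add: inner_diff_left inner_add_left algebra_simps)
qed

lemma sol_char: "s \<in> sol_set F C \<longleftrightarrow> (\<exists>\<mu>\<in>normal_cone C s. F s + \<mu> = 0)"
  unfolding sol_set_def FN_op_def by auto

lemma sol_inner: assumes "s \<in> sol_set F C" shows "inner (v k) (y k - s) \<ge> 0"
proof -
  obtain \<mu> where mu: "\<mu> \<in> normal_cone C s" "F s + \<mu> = 0" using assms sol_char by blast
  have "inner ((F (y k) + \<nu> k) - (F s + \<mu>)) (y k - s) \<ge> 0" by (rule T_mono[OF nu_nc mu(1)])
  then show ?thesis using mu by simp
qed

lemma fejer_good: assumes "good n"
  shows "norm (x (Suc n) - p)^2 \<le> norm (x n - p)^2 - 2 * tau * lam (Suc n) * inner (y (Suc n) - p) (v (Suc n))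
           - tau * (1 - sg^2) * norm (y (Suc n) - x n)^2"
  using hpe_ineq[OF hpe_err[OF assms], of tau p] tau_pos tau_lt x_good[OF assms] by simp

lemma kappa_good: assumes "good n" "s \<in> sol_set F C"
  shows "(1 - sg^2) * norm (y (Suc n) - s)^2 \<le> norm (x n - s)^2"
  by (rule hpe_kappa[OF hpe_err[OF assms(1)] lam_pos sol_inner[OF assms(2)]]) (use sg_pos in simp)

lemma G_Suc: "good_steps \<eta> x y lam (Suc k) = good_steps \<eta> x y lam k \<union> (if good k then {Suc k} else {})"
  unfolding good_steps_def by (auto simp: le_Suc_eq)
lemma G_notin: "Suc k \<notin> good_steps \<eta> x y lam k" unfolding good_steps_def by auto
lemma G_fin: "finite (good_steps \<eta> x y lam k)" unfolding good_steps_def by auto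
lemma G_sub: "good_steps \<eta> x y lam k \<subseteq> {1..k}" unfolding good_steps_def by auto
lemma G_mem: "j \<in> good_steps \<eta> x y lam k \<Longrightarrow> j \<ge> 1 \<and> j \<le> k \<and> good (j - 1)"
  unfolding good_steps_def by (cases j) auto

lemma x_tele: "x k = x 0 - (\<Sum>j\<in>good_steps \<eta> x y lam k. (tau * lam j) *\<^sub>R v j)"
proof (induction k)
  case 0 then show ?case by (simp add: good_steps_def)
next
  case (Suc k)
  show ?case
  proof (cases "good k")
    case True
    have "x (Suc k) = x k - (tau * lam (Suc k)) *\<^sub>R v (Suc k)" using x_good[OF True] by blast
    also have "\<dots> = x 0 - ((\<Sum>j\<in>good_steps \<eta> x y lam k. (tau * lam j) *\<^sub>R v j) + (tau * lam (Suc k)) *\<^sub>R v (Suc k))"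
      unfolding Suc.IH by (simp only: diff_diff_eq)
    also have "\<dots> = x 0 - (\<Sum>j\<in>good_steps \<eta> x y lam (Suc k). (tau * lam j) *\<^sub>R v j)"
      using True G_notin[of k] G_fin[of k] by (simp add: G_Suc add.commute)
    finally show ?thesis .
  next
    case False
    then show ?thesis using Suc x_bad[OF False] by (simp add: G_Suc)
  qed
qed

lemma fejer_tele:
  "norm (x k - p)^2 + (\<Sum>j\<in>good_steps \<eta> x y lam k. 2 * tau * lam j * inner (y j - p) (v j)
      + tau * (1 - sg^2) * norm (y j - x (j - 1))^2) \<le> norm (x 0 - p)^2"
proof (induction k)
  case 0 then show ?case by (simp add: good_steps_def)
next
  case (Suc k)
  show ?case
  proof (cases "good k")
    case True
    then show ?thesis using Suc fejer_good[OF True, of p] G_notin[of k] G_fin[of k] by (simp add: G_Suc)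
  next
    case False
    then show ?thesis using Suc x_bad[OF False] by (simp add: G_Suc)
  qed
qed

lemma sol_dist_mono: assumes "s \<in> sol_set F C" shows "norm (x k - s) \<le> norm (x 0 - s)"
proof -
  have "(\<Sum>j\<in>good_steps \<eta> x y lam k. 2 * tau * lam j * inner (y j - s) (v j)
      + tau * (1 - sg^2) * norm (y j - x (j - 1))^2) \<ge> 0"
  proof (rule sum_nonneg)
    fix j assume j: "j \<in> good_steps \<eta> x y lam k"
    then obtain n where "j = Suc n" using G_mem by (cases j) auto
    then have a: "0 \<le> 2 * tau * lam j" using lam_pos[of n] tau_pos by simp
    have b: "inner (y j - s) (v j) \<ge> 0" using sol_inner[OF assms] by (simp add: inner_commute)
    have c: "0 \<le> 1 - sg^2" using sg_pos sg_lt by (simp add: power_le_one)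
    show "0 \<le> 2 * tau * lam j * inner (y j - s) (v j) + tau * (1 - sg^2) * norm (y j - x (j - 1))^2"
    proof (rule add_nonneg_nonneg)
      show "0 \<le> 2 * tau * lam j * inner (y j - s) (v j)" using a b by simp
      show "0 \<le> tau * (1 - sg^2) * norm (y j - x (j - 1))^2" using c tau_pos by simp
    qed
  qed
  then have "norm (x k - s)^2 \<le> norm (x 0 - s)^2" using fejer_tele[of k s] by linarith
  then show ?thesis by (simp add: power_mono_iff)
qed

lemma sum_e_bound: assumes "s \<in> sol_set F C"
  shows "tau * (1 - sg^2) * (\<Sum>j\<in>good_steps \<eta> x y lam k. norm (y j - x (j - 1))^2) \<le> norm (x 0 - s)^2"
proof -
  have "(\<Sum>j\<in>good_steps \<eta> x y lam k. 2 * tau * lam j * inner (y j - s) (v j)) \<ge> 0"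
  proof (rule sum_nonneg)
    fix j assume j: "j \<in> good_steps \<eta> x y lam k"
    then obtain n where "j = Suc n" using G_mem by (cases j) auto
    then have a: "0 \<le> 2 * tau * lam j" using lam_pos[of n] tau_pos by simp
    have b: "inner (y j - s) (v j) \<ge> 0" using sol_inner[OF assms] by (simp add: inner_commute)
    show "0 \<le> 2 * tau * lam j * inner (y j - s) (v j)" using a b by simp
  qed
  then show ?thesis using fejer_tele[of k s]
    by (simp add: sum.distrib sum_distrib_left) (smt (verit) zero_le_power2)
qed

end



context alg2 begin

abbreviation "Lam \<equiv> \<eta> + 2 * tq / L"
abbreviation A where "A k \<equiv> card (good_steps \<eta> x y lam k)"

lemma A_le: "A k \<le> k"
  using card_mono[OF _ G_sub[of k]] by simp

lemma A_Suc: "A (Suc k) = A k + (if good k then 1 else 0)"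
  using G_notin[of k] G_fin[of k] by (simp add: G_Suc)

lemma lam_formula: "lam (Suc k) * (1 - tau)^(k - A k) = lam 1 * (1 - tau)^(A k)"
proof (induction k)
  case 0 then show ?case by (simp add: good_steps_def)
next
  case (Suc k)
  have ak: "A k \<le> k" by (rule A_le)
  show ?case
  proof (cases "good k")
    case True
    then have "A (Suc k) = Suc (A k)" using A_Suc by simp
    moreover have "Suc k - Suc (A k) = k - A k" by simp
    moreover have ls: "lam (Suc (Suc k)) = (1 - tau) * lam (Suc k)" using x_good[OF True] by blast
    ultimately have "lam (Suc (Suc k)) * (1 - tau)^(Suc k - A (Suc k)) = (1 - tau) * (lam (Suc k) * (1 - tau)^(k - A k))"
      by simp
    also have "\<dots> = lam 1 * (1 - tau)^(A (Suc k))" unfolding Suc.IH using \<open>A (Suc k) = Suc (A k)\<close> by simp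
    finally show ?thesis .
  next
    case False
    then have a: "A (Suc k) = A k" using A_Suc by simp
    have b: "Suc k - A k = Suc (k - A k)" using ak by simp
    have t1: "1 - tau \<noteq> 0" using tau_lt by simp
    have ls: "lam (Suc (Suc k)) = lam (Suc k) / (1 - tau)" using x_bad[OF False] by blast
    have "lam (Suc (Suc k)) * (1 - tau)^(Suc k - A (Suc k)) = (lam (Suc k) / (1 - tau)) * ((1 - tau) * (1 - tau)^(k - A k))"
      unfolding a b ls by simp
    also have "\<dots> = lam (Suc k) * (1 - tau)^(k - A k)" using t1 by simp
    finally show ?thesis using Suc.IH a by simp
  qed
qed

lemma bad_bound: assumes "\<not> good n"
  shows "lam (Suc n)^2 * norm (v (Suc n)) < Lam"
proof -
  define l where "l = lam (Suc n)"
  define r where "r = l *\<^sub>R v (Suc n) + y (Suc n) - x n"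
  define e where "e = y (Suc n) - x n"
  have l0: "l > 0" using lam_pos by (simp add: l_def)
  have h1: "l * L / 2 * norm r \<le> tq" using res(2)[of n] by (simp add: l_def r_def)
  then have h1': "l * norm r \<le> 2 * tq / L" using L_pos by (simp add: field_simps)
  have h2: "l * norm e < \<eta>" using assms by (simp add: l_def e_def)
  have "l *\<^sub>R v (Suc n) = r - e" by (simp add: r_def e_def)
  then have "norm (l *\<^sub>R v (Suc n)) \<le> norm r + norm e" by (metis norm_triangle_ineq4)
  then have "l * norm (v (Suc n)) \<le> norm r + norm e" using l0 by simp
  then have "l * (l * norm (v (Suc n))) \<le> l * (norm r + norm e)" using l0 by (intro mult_left_mono) auto
  also have "\<dots> = l * norm r + l * norm e" by (simp add: algebra_simps)
  also have "\<dots> < 2 * tq / L + \<eta>" using h1' h2 by linarith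
  finally show ?thesis by (simp add: l_def power2_eq_square algebra_simps)
qed

lemma bad_count_step:
  fixes \<rho> :: real
  assumes bad: "\<not> good n" and vr: "norm (v (Suc n)) > \<rho>" and rho: "\<rho> > 0"
  shows "real (n - A n) - real (A n) < log_plus (Lam / ((lam 1)^2 * \<rho>)) / (2 * tau)"
proof -
  define l where "l = lam (Suc n)"
  define R where "R = Lam / ((lam 1)^2 * \<rho>)"
  have l0: "l > 0" using lam_pos by (simp add: l_def)
  have l1: "lam 1 > 0" using lam_pos[of 0] by simp
  have t0: "0 < 1 - tau" using tau_lt by simp
  have "l^2 * \<rho> < l^2 * norm (v (Suc n))" using vr l0 by simp
  also have "\<dots> < Lam" using bad_bound[OF bad] by (simp add: l_def)
  finally have lr: "l^2 * \<rho> < Lam" .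
  have lp0: "log_plus R \<ge> 0" by (simp add: log_plus_def)
  have lf: "l * (1 - tau)^(n - A n) = lam 1 * (1 - tau)^(A n)" using lam_formula[of n] by (simp add: l_def)
  show ?thesis
  proof (cases "n - A n \<le> A n")
    case True
    show ?thesis
    proof (cases "n - A n = A n")
      case True
      then have "l = lam 1" using lf t0 by simp
      then have "(lam 1)^2 * \<rho> < Lam" using lr by simp
      then have "R > 1" unfolding R_def using l1 rho by simp
      then have "log_plus R > 0" by (simp add: log_plus_def)
      then show ?thesis using True tau_pos by (simp add: R_def)
    next
      case False
      then have "real (n - A n) - real (A n) < 0" using \<open>n - A n \<le> A n\<close> by linarith
      moreover have "log_plus R / (2 * tau) \<ge> 0" using lp0 tau_pos by simp
      ultimately show ?thesis by (simp add: R_def)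
    qed
  next
    case False
    define m where "m = n - A n - A n"
    have m1: "m \<ge> 1" using False by (simp add: m_def)
    have "(1 - tau)^(n - A n) = (1 - tau)^(A n) * (1 - tau)^m"
      using False by (simp add: m_def power_add[symmetric])
    then have "l * (1 - tau)^m = lam 1" using lf t0 by (simp add: algebra_simps)
    then have "(lam 1)^2 = (l * (1 - tau)^m)^2" by simp
    then have "(lam 1)^2 = l^2 * ((1 - tau)^m)^2" by (simp only: power_mult_distrib)
    then have "(lam 1)^2 * \<rho> < Lam * ((1 - tau)^m)^2"
    proof -
      have "(lam 1)^2 * \<rho> = (l^2 * \<rho>) * ((1 - tau)^m)^2" using \<open>(lam 1)^2 = l^2 * ((1 - tau)^m)^2\<close> by simp
      also have "\<dots> < Lam * ((1 - tau)^m)^2" using lr t0 by (intro mult_strict_right_mono) auto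
      finally show ?thesis .
    qed
    then have Rb: "1 < R * ((1 - tau)^m)^2" unfolding R_def using l1 rho
      by (simp add: field_simps)
    have Lp: "Lam > 0" using eta_pos tq_pos L_pos by (simp add: add_pos_pos)
    have Rpos: "R > 0" unfolding R_def using Lp l1 rho by simp
    have "0 < ln (R * ((1 - tau)^m)^2)" using Rb by simp
    also have "\<dots> = ln R + 2 * m * ln (1 - tau)" using Rpos t0 by (simp add: ln_mult ln_realpow power_mult[symmetric] mult.commute)
    also have "\<dots> \<le> ln R + 2 * m * (- tau)"
      using ln_one_minus_pos_upper_bound[of tau] tau_pos tau_lt by (intro add_left_mono mult_left_mono) auto
    finally have "2 * m * tau < ln R" by simp
    then have "2 * tau * m < log_plus R" by (simp add: log_plus_def algebra_simps)
    then have "m < log_plus R / (2 * tau)" using tau_pos by (simp add: field_simps)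
    moreover have "real (n - A n) - real (A n) = m" using False by (simp add: m_def)
    ultimately show ?thesis by (simp add: R_def)
  qed
qed

lemma count_bound:
  fixes \<rho> :: real
  assumes vr: "\<forall>j\<in>{1..M}. norm (v j) > \<rho>" and rho: "\<rho> > 0" and kM: "k \<le> M"
  shows "int k - 2 * int (A k) \<le> \<lceil>log_plus (Lam / ((lam 1)^2 * \<rho>)) / (2 * tau)\<rceil>"
  using kM
proof (induction k)
  case 0
  have "log_plus (Lam / ((lam 1)^2 * \<rho>)) / (2 * tau) \<ge> 0" using tau_pos by (simp add: log_plus_def)
  then show ?case by (simp add: good_steps_def)
next
  case (Suc k)
  have ak: "A k \<le> k" by (rule A_le)
  show ?case
  proof (cases "good k")
    case True
    then show ?thesis using Suc A_Suc[of k] by simp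
  next
    case False
    have "norm (v (Suc k)) > \<rho>" using vr Suc.prems by auto
    from bad_count_step[OF False this rho]
    have "of_int (int (k - A k) - int (A k)) < log_plus (Lam / ((lam 1)^2 * \<rho>)) / (2 * tau)" by simp
    then have "int (k - A k) - int (A k) + 1 \<le> \<lceil>log_plus (Lam / ((lam 1)^2 * \<rho>)) / (2 * tau)\<rceil>"
      by (simp add: le_ceiling_iff)
    then show ?thesis using A_Suc[of k] False ak by simp
  qed
qed

end



context alg2 begin

lemma F_cont: "continuous_on C F"
  using F_deriv has_derivative_continuous continuous_on_eq_continuous_within by blast

lemma sol_eq: "sol_set F C = C \<inter> (\<Inter>w\<in>C. {z \<in> C. 0 \<le> inner (F z) (w - z)})"
proof -
  have "z \<in> sol_set F C \<longleftrightarrow> z \<in> C \<and> (\<forall>w\<in>C. 0 \<le> inner (F z) (w - z))" for z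
  proof -
    have "z \<in> sol_set F C \<longleftrightarrow> z \<in> C \<and> (\<forall>w\<in>C. inner (- F z) (w - z) \<le> 0)"
      unfolding sol_char normal_cone_def by (auto simp: add_eq_0_iff)
    then show ?thesis by simp
  qed
  then show ?thesis by auto
qed

lemma sol_closed: assumes "closed C" shows "closed (sol_set F C)"
proof -
  have "closed {z \<in> C. (\<lambda>_. 0) z \<le> (\<lambda>z. inner (F z) (w - z)) z}" for w
    by (rule continuous_on_closed_Collect_le[OF _ _ assms]) (intro continuous_intros F_cont)+
  then show ?thesis unfolding sol_eq by (intro closed_Int assms closed_INT) auto
qed

lemma x0_not_sol: assumes sol: "x 0 \<in> sol_set F C" shows False
proof -
  define q where "q = 1 / (1 - tau)"
  have t0: "0 < 1 - tau" using tau_lt by simp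
  obtain \<mu> where mu: "\<mu> \<in> normal_cone C (x 0)" "F (x 0) + \<mu> = 0" using sol sol_char by blast
  have x0C: "x 0 \<in> C" using run0 by simp
  have Fx0: "F (x 0) \<noteq> 0" using run0(6)[of 0] run0 by simp
  have testpass: "lam (Suc n) * L / 2 * norm (lam (Suc n) *\<^sub>R v n + y n - x n) \<le> tq"
    if P: "y n = x 0 \<and> \<nu> n = 0 \<and> x n = x 0" for n
  proof (rule ccontr)
    assume nt: "\<not> ?thesis"
    define l where "l = lam (Suc n)"
    define y' where "y' = y (Suc n)"
    define \<nu>' where "\<nu>' = \<nu> (Suc n)"
    have l0: "l > 0" using lam_pos by (simp add: l_def)
    have b: "\<nu>' \<in> normal_cone C y'"
      "norm (l *\<^sub>R (F (x 0) + F' (x 0) (y' - x 0) + \<nu>') + y' - x 0) \<le> \<sigma>h * norm (y' - x 0)"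
      using run_step[of n] nt P by (auto simp: l_def y'_def \<nu>'_def)
    have y'C: "y' \<in> C" using nc_mem[OF b(1)] by simp
    define g where "g = F (x 0) + F' (x 0) (y' - x 0) + \<nu>'"
    define d where "d = y' - x 0"
    have g_eq: "g = F' (x 0) d + (\<nu>' - \<mu>)" using mu by (simp add: g_def d_def algebra_simps)
    have m1: "inner (F' (x 0) d) d \<ge> 0" unfolding d_def by (rule deriv_mono_dir[OF C_convex x0C y'C F_deriv F'_lip F_mono])
    have m2: "inner (\<nu>' - \<mu>) d \<ge> 0" unfolding d_def by (rule nc_mono[OF b(1) mu(1)])
    have gi: "inner g d \<ge> 0" using m1 m2 unfolding g_eq by (simp add: inner_add_left)
    define e where "e = l *\<^sub>R g + d"
    have "inner e d = l * inner g d + norm d ^2" by (simp add: e_def inner_add_left power2_norm_eq_inner)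
    then have "norm d^2 \<le> inner e d" using gi l0 by simp
    also have "\<dots> \<le> norm e * norm d" by (rule norm_cauchy_schwarz)
    also have "\<dots> \<le> \<sigma>h * norm d * norm d" using b(2) by (intro mult_right_mono) (auto simp: e_def g_def d_def algebra_simps)
    finally have "norm d^2 \<le> \<sigma>h * norm d^2" by (simp add: power2_eq_square)
    then have "(1 - \<sigma>h) * norm d^2 \<le> 0" by (simp add: algebra_simps)
    moreover have "1 - \<sigma>h > 0" using sh by simp
    ultimately have "norm d^2 \<le> 0" by (simp add: mult_le_0_iff)
    then have "norm d = 0" by simp
    then have d0: "y' = x 0" by (simp add: d_def)
    then have "norm (l *\<^sub>R (F (x 0) + \<nu>')) \<le> 0" using b(2) by simp
    then have "l * norm (F (x 0) + \<nu>') \<le> 0" using l0 by simp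
    then have "norm (F (x 0) + \<nu>') \<le> 0" using l0 by (simp add: mult_le_0_iff)
    then have "F (x 0) + \<nu>' = 0" by simp
    then show False using run0(6)[of "Suc n"] d0 by (simp add: y'_def \<nu>'_def)
  qed
  have P: "y n = x 0 \<and> \<nu> n = 0 \<and> x n = x 0 \<and> lam (Suc n) = lam 1 * q^n" for n
  proof (induction n)
    case 0 then show ?case using run0 by simp
  next
    case (Suc n)
    have tp: "lam (Suc n) * L / 2 * norm (lam (Suc n) *\<^sub>R v n + y n - x n) \<le> tq" using testpass Suc by blast
    then have ys: "y (Suc n) = y n" "\<nu> (Suc n) = \<nu> n" using run_step[of n] by auto
    have "\<not> good n" using ys Suc eta_pos by simp
    from x_bad[OF this] show ?case using ys Suc t0 by (simp add: q_def field_simps)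
  qed
  have q1: "q > 1" using t0 tau_pos by (simp add: q_def)
  have l1: "lam 1 > 0" using lam_pos[of 0] by simp
  define c where "c = (lam 1)^2 * norm (F (x 0)) * L / 2"
  have c0: "c > 0" using l1 Fx0 L_pos by (simp add: c_def)
  obtain n where n: "tq / c < q^n" using real_arch_pow[OF q1] by blast
  have tp: "lam (Suc n) * L / 2 * norm (lam (Suc n) *\<^sub>R v n + y n - x n) \<le> tq" using testpass P by blast
  then have "c * (q^n)^2 \<le> tq" using P[of n] l1 q1 by (simp add: c_def power2_eq_square algebra_simps)
  moreover have "q^n \<le> (q^n)^2" using q1 by (simp add: power2_eq_square)
  moreover have "tq < c * q^n" using n c0 by (simp add: field_simps)
  moreover have "c * q^n \<le> c * (q^n)^2" using c0 \<open>q^n \<le> (q^n)^2\<close> by (intro mult_left_mono) auto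
  ultimately show False by linarith
qed

end



lemma transport:
  fixes Y V :: "nat \<Rightarrow> 'a::real_inner" and w :: "nat \<Rightarrow> real"
  assumes fin: "finite G" and S0: "(\<Sum>j\<in>G. w j) > 0"
  defines "S \<equiv> (\<Sum>j\<in>G. w j)"
  defines "yb \<equiv> (1 / S) *\<^sub>R (\<Sum>j\<in>G. w j *\<^sub>R Y j)"
  defines "vb \<equiv> (1 / S) *\<^sub>R (\<Sum>j\<in>G. w j *\<^sub>R V j)"
  defines "eb \<equiv> (1 / S) * (\<Sum>j\<in>G. w j * inner (Y j - yb) (V j - vb))"
  shows "inner (vb - u) (yb - z) = (1 / S) * (\<Sum>j\<in>G. w j * inner (V j - u) (Y j - z)) - eb"
proof -
  have Sp: "S > 0" using S0 by (simp add: S_def)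
  have sY: "(\<Sum>j\<in>G. w j *\<^sub>R (Y j - yb)) = 0"
  proof -
    have "(\<Sum>j\<in>G. w j *\<^sub>R (Y j - yb)) = (\<Sum>j\<in>G. w j *\<^sub>R Y j) - S *\<^sub>R yb"
      by (simp add: scaleR_diff_right sum_subtractf S_def scaleR_sum_left)
    also have "\<dots> = 0" using Sp by (simp add: yb_def)
    finally show ?thesis .
  qed
  have sV: "(\<Sum>j\<in>G. w j *\<^sub>R (V j - vb)) = 0"
  proof -
    have "(\<Sum>j\<in>G. w j *\<^sub>R (V j - vb)) = (\<Sum>j\<in>G. w j *\<^sub>R V j) - S *\<^sub>R vb"
      by (simp add: scaleR_diff_right sum_subtractf S_def scaleR_sum_left)
    also have "\<dots> = 0" using Sp by (simp add: vb_def)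
    finally show ?thesis .
  qed
  have trm: "w j * inner (V j - u) (Y j - z) =
      w j * inner (Y j - yb) (V j - vb) + inner (w j *\<^sub>R (V j - vb)) (yb - z)
      + inner (vb - u) (w j *\<^sub>R (Y j - yb)) + w j * inner (vb - u) (yb - z)" for j
  proof -
    have "V j - u = (V j - vb) + (vb - u)" "Y j - z = (Y j - yb) + (yb - z)" by simp_all
    then have "inner (V j - u) (Y j - z) = inner (V j - vb) (Y j - yb) + inner (V j - vb) (yb - z)
       + inner (vb - u) (Y j - yb) + inner (vb - u) (yb - z)"
      by (metis (no_types, lifting) inner_add_left inner_add_right add.assoc)
    then show ?thesis by (simp add: algebra_simps inner_commute)
  qed
  have "(\<Sum>j\<in>G. w j * inner (V j - u) (Y j - z)) =
      (\<Sum>j\<in>G. w j * inner (Y j - yb) (V j - vb)) + inner (\<Sum>j\<in>G. w j *\<^sub>R (V j - vb)) (yb - z)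
      + inner (vb - u) (\<Sum>j\<in>G. w j *\<^sub>R (Y j - yb)) + S * inner (vb - u) (yb - z)"
    unfolding trm by (simp add: sum.distrib inner_sum_left inner_sum_right S_def sum_distrib_right)
  also have "\<dots> = S * eb + S * inner (vb - u) (yb - z)" unfolding sV sY using Sp by (simp add: eb_def)
  finally show ?thesis using Sp by (simp add: field_simps)
qed

lemma recip_tangent:
  fixes a s :: real assumes "a > 0" "s > 0"
  shows "1 / a \<ge> 3 / 2 * s - s^3 / 2 * a^2"
proof -
  define u where "u = s * a"
  have u0: "u > 0" using assms by (simp add: u_def)
  have "0 \<le> (u - 1)^2 * (u + 2)" using u0 by simp
  then have "3 * u - u^3 \<le> 2" by (simp add: power2_eq_square power3_eq_cube algebra_simps)
  then have "(3 / 2 * s - s^3 / 2 * a^2) * a \<le> 1" by (simp add: u_def power3_eq_cube power2_eq_square algebra_simps)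
  then show ?thesis using assms by (simp add: field_simps)
qed




lemma tri3: fixes a b c :: "'a::real_normed_vector" shows "norm (a - b) \<le> norm (a - c) + norm (b - c)"
proof -
  have "a - b = (a - c) - (b - c)" by simp
  then show ?thesis by (metis norm_triangle_ineq4)
qed

context alg2 begin

abbreviation G where "G k \<equiv> good_steps \<eta> x y lam k"
abbreviation S where "S k \<equiv> (\<Sum>j\<in>G k. lam j)"
definition kap :: real where "kap = 1 / sqrt (1 - sg^2)"

lemma sg2_pos: "1 - sg^2 > 0" using sg_pos sg_lt by (simp add: power_less_one_iff abs_less_iff)

lemma kap1: "kap \<ge> 1"
proof -
  have a: "sqrt (1 - sg^2) \<le> 1" using sg2_pos by simp
  have b: "sqrt (1 - sg^2) > 0" using sg2_pos by simp
  show ?thesis using a b by (simp add: le_divide_eq_1 kap_def)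
qed

lemma lamG: "j \<in> G k \<Longrightarrow> lam j > 0"
  using G_mem[of j k] lam_pos[of "j - 1"] by simp

lemma S_pos: "G k \<noteq> {} \<Longrightarrow> S k > 0"
  using G_fin[of k] lamG by (intro sum_pos) auto

lemma erg_transport: assumes "G k \<noteq> {}"
  shows "inner (erg_v F \<eta> x y \<nu> lam k - u) (erg_y \<eta> x y lam k - z)
     = (1 / S k) * (\<Sum>j\<in>G k. lam j * inner (v j - u) (y j - z)) - erg_eps F \<eta> x y \<nu> lam k"
  unfolding erg_v_def erg_y_def erg_eps_def
  by (rule transport[OF G_fin S_pos[OF assms]])

lemma pt_enl: "v k \<in> enlargement (FN_op F C) 0 (y k)"
  unfolding enlargement_def FN_op_def using T_mono[OF nu_nc] by auto

lemma erg_enl: assumes "G k \<noteq> {}"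
  shows "erg_v F \<eta> x y \<nu> lam k \<in> enlargement (FN_op F C) (erg_eps F \<eta> x y \<nu> lam k) (erg_y \<eta> x y lam k)"
proof -
  have "inner (erg_v F \<eta> x y \<nu> lam k - u) (erg_y \<eta> x y lam k - z) \<ge> - erg_eps F \<eta> x y \<nu> lam k"
    if u: "u \<in> FN_op F C z" for u z
  proof -
    obtain \<mu> where mu: "\<mu> \<in> normal_cone C z" "u = F z + \<mu>" using u unfolding FN_op_def by auto
    have "(\<Sum>j\<in>G k. lam j * inner (v j - u) (y j - z)) \<ge> 0"
      using T_mono[OF nu_nc mu(1)] lamG mu(2) by (intro sum_nonneg mult_nonneg_nonneg) (auto simp: less_imp_le)
    then have "(1 / S k) * (\<Sum>j\<in>G k. lam j * inner (v j - u) (y j - z)) \<ge> 0"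
      using S_pos[OF assms] by simp
    then show ?thesis unfolding erg_transport[OF assms] by simp
  qed
  then show ?thesis unfolding enlargement_def by auto
qed

lemma erg_eps_nonneg: assumes "G k \<noteq> {}" shows "erg_eps F \<eta> x y \<nu> lam k \<ge> 0"
proof -
  define yb where "yb = erg_y \<eta> x y lam k"
  define vb where "vb = erg_v F \<eta> x y \<nu> lam k"
  define eb where "eb = erg_eps F \<eta> x y \<nu> lam k"
  have Sp: "S k > 0" using S_pos[OF assms] .
  have each: "inner (vb - v i) (yb - y i) \<ge> - eb" if "i \<in> G k" for i
  proof -
    have "(\<Sum>j\<in>G k. lam j * inner (v j - v i) (y j - y i)) \<ge> 0"
      using T_mono[OF nu_nc nu_nc] lamG by (intro sum_nonneg mult_nonneg_nonneg) (auto simp: less_imp_le)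
    then have "(1 / S k) * (\<Sum>j\<in>G k. lam j * inner (v j - v i) (y j - y i)) \<ge> 0" using Sp by simp
    then show ?thesis using erg_transport[OF assms, of "v i" "y i"] by (simp add: yb_def vb_def eb_def)
  qed
  have "S k * eb = (\<Sum>j\<in>G k. lam j * inner (y j - yb) (v j - vb))"
    using Sp by (simp add: eb_def erg_eps_def yb_def vb_def)
  also have "\<dots> = (\<Sum>j\<in>G k. lam j * inner (vb - v j) (yb - y j))"
    by (intro sum.cong refl) (simp add: inner_diff_left inner_diff_right inner_commute algebra_simps)
  also have "\<dots> \<ge> (\<Sum>j\<in>G k. lam j * (- eb))"
    using each lamG by (intro sum_mono mult_left_mono) (auto simp: less_imp_le)
  also have "(\<Sum>j\<in>G k. lam j * (- eb)) = - (S k * eb)" by (simp add: sum_negf sum_distrib_right)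
  finally have "S k * eb \<ge> - (S k * eb)" by simp
  then show ?thesis using Sp by (simp add: eb_def zero_le_mult_iff)
qed

lemma erg_v_eq: assumes "G k \<noteq> {}"
  shows "erg_v F \<eta> x y \<nu> lam k = (1 / (tau * S k)) *\<^sub>R (x 0 - x k)"
proof -
  have "x 0 - x k = (\<Sum>j\<in>G k. (tau * lam j) *\<^sub>R v j)" using x_tele[of k] by simp
  also have "\<dots> = tau *\<^sub>R (\<Sum>j\<in>G k. lam j *\<^sub>R v j)" by (simp add: scaleR_sum_right)
  finally have "(\<Sum>j\<in>G k. lam j *\<^sub>R v j) = (1 / tau) *\<^sub>R (x 0 - x k)" using tau_pos by simp
  then show ?thesis unfolding erg_v_def by simp
qed

lemma erg_v_bound: assumes "G k \<noteq> {}" "s \<in> sol_set F C"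
  shows "norm (erg_v F \<eta> x y \<nu> lam k) \<le> 2 * norm (x 0 - s) / (tau * S k)"
proof -
  have p: "tau * S k > 0" using tau_pos S_pos[OF assms(1)] by simp
  have "norm (x 0 - x k) \<le> norm (x 0 - s) + norm (x k - s)" by (rule tri3)
  also have "\<dots> \<le> 2 * norm (x 0 - s)" using sol_dist_mono[OF assms(2), of k] by simp
  finally have "norm (x 0 - x k) \<le> 2 * norm (x 0 - s)" .
  then show ?thesis unfolding erg_v_eq[OF assms(1)] using p by (simp add: divide_right_mono)
qed

lemma ybar_bound: assumes "G k \<noteq> {}" "s \<in> sol_set F C"
  shows "norm (erg_y \<eta> x y lam k - s) \<le> kap * norm (x 0 - s)"
proof -
  define D where "D = norm (x 0 - s)"
  have Sp: "S k > 0" using S_pos[OF assms(1)] .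
  have sg2: "1 - sg^2 > 0" using sg_pos sg_lt by (simp add: power_less_one_iff abs_less_iff)
  have yj: "norm (y j - s) \<le> kap * D" if j: "j \<in> G k" for j
  proof -
    obtain n where n: "j = Suc n" "good n" using G_mem[OF j] by (cases j) auto
    have "(1 - sg^2) * norm (y j - s)^2 \<le> norm (x n - s)^2" using kappa_good[OF n(2) assms(2)] n by simp
    also have "\<dots> \<le> D^2" using sol_dist_mono[OF assms(2), of n] by (simp add: D_def power_mono)
    finally have "norm (y j - s)^2 \<le> D^2 / (1 - sg^2)" using sg2 by (simp add: field_simps)
    then have "norm (y j - s) \<le> sqrt (D^2 / (1 - sg^2))" by (simp add: real_le_rsqrt)
    also have "\<dots> = kap * D" using sg2 by (simp add: D_def real_sqrt_divide kap_def)
    finally show ?thesis .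
  qed
  have "erg_y \<eta> x y lam k - s = (1 / S k) *\<^sub>R (\<Sum>j\<in>G k. lam j *\<^sub>R (y j - s))"
    using Sp by (simp add: erg_y_def scaleR_diff_right sum_subtractf scaleR_sum_left[symmetric])
  then have "norm (erg_y \<eta> x y lam k - s) = (1 / S k) * norm (\<Sum>j\<in>G k. lam j *\<^sub>R (y j - s))" using Sp by simp
  also have "\<dots> \<le> (1 / S k) * (\<Sum>j\<in>G k. lam j * (kap * D))"
  proof -
    have "norm (\<Sum>j\<in>G k. lam j *\<^sub>R (y j - s)) \<le> (\<Sum>j\<in>G k. norm (lam j *\<^sub>R (y j - s)))" by (rule norm_sum)
    also have "\<dots> \<le> (\<Sum>j\<in>G k. lam j * (kap * D))"
    proof (rule sum_mono)
      fix j assume j: "j \<in> G k"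
      show "norm (lam j *\<^sub>R (y j - s)) \<le> lam j * (kap * D)"
        using mult_left_mono[OF yj[OF j] less_imp_le[OF lamG[OF j]]] lamG[OF j] by simp
    qed
    finally show ?thesis using Sp by (intro mult_left_mono) auto
  qed
  also have "\<dots> = kap * D" using Sp by (simp add: sum_distrib_right[symmetric])
  finally show ?thesis by (simp add: D_def)
qed

lemma erg_eps_bound: assumes "G k \<noteq> {}" "s \<in> sol_set F C"
  shows "erg_eps F \<eta> x y \<nu> lam k \<le> 2 * kap * norm (x 0 - s)^2 / (tau * S k)"
proof -
  define yb where "yb = erg_y \<eta> x y lam k"
  define eb where "eb = erg_eps F \<eta> x y \<nu> lam k"
  define D where "D = norm (x 0 - s)"
  have Sp: "S k > 0" using S_pos[OF assms(1)] .
  have sg2: "1 - sg^2 > 0" using sg_pos sg_lt by (simp add: power_less_one_iff abs_less_iff)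

  have Seb: "S k * eb = (\<Sum>j\<in>G k. lam j * inner (v j) (y j - yb))"
    using erg_transport[OF assms(1), of 0 yb] Sp by (simp add: yb_def eb_def field_simps)
  have ft: "norm (x k - yb)^2 + (\<Sum>j\<in>G k. 2 * tau * lam j * inner (y j - yb) (v j)
      + tau * (1 - sg^2) * norm (y j - x (j - 1))^2) \<le> norm (x 0 - yb)^2" by (rule fejer_tele)
  have "(\<Sum>j\<in>G k. 2 * tau * lam j * inner (y j - yb) (v j)) \<le> (\<Sum>j\<in>G k. 2 * tau * lam j * inner (y j - yb) (v j)
      + tau * (1 - sg^2) * norm (y j - x (j - 1))^2)"
    using sg2 tau_pos by (intro sum_mono) simp
  moreover have "(\<Sum>j\<in>G k. 2 * tau * lam j * inner (y j - yb) (v j)) = 2 * tau * (S k * eb)"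
    unfolding Seb by (simp add: sum_distrib_left inner_commute algebra_simps)
  ultimately have m: "2 * tau * (S k * eb) \<le> norm (x 0 - yb)^2 - norm (x k - yb)^2" using ft by linarith
  define t where "t = norm (x k - x 0)"
  define P where "P = norm (yb - x 0)"
  have "norm (x 0 - yb)^2 - norm (x k - yb)^2 = 2 * inner (x k - x 0) (yb - x 0) - t^2"
  proof -
    have "x k - yb = (x k - x 0) - (yb - x 0)" by simp
    then have "norm (x k - yb)^2 = t^2 - 2 * inner (x k - x 0) (yb - x 0) + P^2"
      unfolding t_def P_def by (simp add: power2_norm_eq_inner inner_diff_left inner_diff_right inner_commute)
    moreover have "norm (x 0 - yb) = P" by (simp add: P_def norm_minus_commute)
    ultimately show ?thesis by simp
  qed
  also have "\<dots> \<le> 2 * t * P - t^2"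
    using norm_cauchy_schwarz[of "x k - x 0" "yb - x 0"] by (simp add: t_def P_def)
  also have "\<dots> \<le> 4 * kap * D^2"
  proof -
    have tb: "t \<le> 2 * D"
    proof -
      have "t \<le> norm (x k - s) + norm (x 0 - s)" unfolding t_def by (rule tri3)
      then show ?thesis using sol_dist_mono[OF assms(2), of k] by (simp add: D_def)
    qed
    have Pb: "P \<le> (1 + kap) * D"
    proof -
      have "P \<le> norm (yb - s) + norm (x 0 - s)" unfolding P_def by (rule tri3)
      then show ?thesis using ybar_bound[OF assms] by (simp add: yb_def D_def algebra_simps)
    qed
    have t0: "t \<ge> 0" by (simp add: t_def)
    have "2 * t * P - t^2 \<le> 2 * t * ((1 + kap) * D) - t^2" using Pb t0 by (simp add: mult_left_mono)
    also have "\<dots> = 4 * kap * D^2 - (t - 2 * D) * (t - 2 * kap * D)"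
    proof -
      have alg: "\<And>K. 2 * t * ((1 + K) * D) - t^2 = 4 * K * D^2 - (t - 2 * D) * (t - 2 * K * D)"
        by (simp add: algebra_simps power2_eq_square)
      show ?thesis by (rule alg)
    qed
    also have "\<dots> \<le> 4 * kap * D^2"
    proof -
      have "1 * D \<le> kap * D" using kap1 by (intro mult_right_mono) (auto simp: D_def)
      then have "2 * D \<le> 2 * kap * D" by simp
      then have "(t - 2 * D) * (t - 2 * kap * D) \<ge> 0" using tb by (intro mult_nonpos_nonpos) auto
      then show ?thesis by simp
    qed
    finally show ?thesis .
  qed
  finally have "2 * tau * (S k * eb) \<le> 4 * kap * D^2" using m by linarith
  then have "eb * (tau * S k) \<le> (2 * kap * D^2)" by (simp add: algebra_simps)
  then show ?thesis using tau_pos Sp by (simp add: eb_def D_def pos_le_divide_eq)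
qed

lemma S_lower: assumes "G k \<noteq> {}" "s0 > 0"
  shows "S k \<ge> \<eta> * (3 / 2 * s0 * A k - s0^3 / 2 * (\<Sum>j\<in>G k. norm (y j - x (j - 1))^2))"
proof -
  have each: "lam j \<ge> \<eta> * (3 / 2 * s0 - s0^3 / 2 * norm (y j - x (j - 1))^2)" if j: "j \<in> G k" for j
  proof -
    obtain n where n: "j = Suc n" "good n" using G_mem[OF j] by (cases j) auto
    define a where "a = norm (y j - x (j - 1))"
    have la: "lam j * a \<ge> \<eta>" using n by (simp add: a_def)
    have a0: "a > 0" using la eta_pos by (cases "a = 0") (auto simp: a_def)
    have "lam j \<ge> \<eta> / a" using la a0 by (simp add: field_simps)
    moreover have "\<eta> / a \<ge> \<eta> * (3 / 2 * s0 - s0^3 / 2 * a^2)"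
    proof -
      have "\<eta> * (3 / 2 * s0 - s0^3 / 2 * a^2) \<le> \<eta> * (1 / a)"
        using recip_tangent[OF a0 assms(2)] eta_pos by (intro mult_left_mono) auto
      then show ?thesis by simp
    qed
    ultimately show ?thesis by (simp add: a_def)
  qed
  have "(\<Sum>j\<in>G k. \<eta> * (3 / 2 * s0 - s0^3 / 2 * norm (y j - x (j - 1))^2)) \<le> S k"
    by (rule sum_mono) (rule each)
  moreover have "(\<Sum>j\<in>G k. \<eta> * (3 / 2 * s0 - s0^3 / 2 * norm (y j - x (j - 1))^2))
      = \<eta> * (3 / 2 * s0 * A k - s0^3 / 2 * (\<Sum>j\<in>G k. norm (y j - x (j - 1))^2))"
    by (simp add: sum_distrib_left sum_subtractf algebra_simps)
  ultimately show ?thesis by simp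
qed

end



lemma inf_bound:
  fixes x0 :: "'a::metric_space" and c Q :: real
  assumes A: "A \<noteq> {}" and c: "c \<ge> 0" and h: "\<forall>s\<in>A. Q \<le> c * dist x0 s ^ p"
  shows "Q \<le> c * infdist x0 A ^ p"
proof (rule ccontr)
  define d where "d = infdist x0 A"
  define f where "f = (\<lambda>t::real. c * t ^ p)"
  assume "\<not> ?thesis"
  then have r: "Q - f d > 0" by (simp add: f_def d_def)
  have "f \<midarrow>d\<rightarrow> f d" unfolding f_def by (intro tendsto_intros)
  from LIM_D[OF this r] obtain \<delta> where \<delta>: "\<delta> > 0" "\<And>t. t \<noteq> d \<and> norm (t - d) < \<delta> \<Longrightarrow> norm (f t - f d) < Q - f d"
    by blast
  obtain s where s: "s \<in> A" "dist x0 s < d + \<delta>"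
  proof (rule ccontr)
    assume "\<not> thesis"
    then have "\<forall>s\<in>A. d + \<delta> \<le> dist x0 s" using that by force
    then have "d + \<delta> \<le> infdist x0 A" unfolding infdist_notempty[OF A] by (intro cINF_greatest A) auto
    then show False using \<delta> by (simp add: d_def)
  qed
  have ge: "dist x0 s \<ge> d" using infdist_le[OF s(1)] by (simp add: d_def)
  have Qs: "Q \<le> f (dist x0 s)" using h s(1) by (simp add: f_def)
  show False
  proof (cases "dist x0 s = d")
    case True then show False using Qs r by simp
  next
    case False
    then have "norm (f (dist x0 s) - f d) < Q - f d" using \<delta>(2)[of "dist x0 s"] s ge by simp
    then show False using Qs by simp
  qed
qed

lemma final_b:
  fixes A E eta tau rho S Q :: real
  assumes A: "A > 0" and E: "E > 0" and eta: "eta > 0" and tau: "tau > 0" and rho: "rho > 0" and Q: "Q \<ge> 0"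
    and Sl: "\<And>s. s > 0 \<Longrightarrow> S \<ge> eta * (3/2 * s * A - s^3/2 * E)"
    and key: "A^3 * (eta^2 * tau^2 * rho^2) \<ge> Q^2 * E"
  shows "Q / (tau * S) \<le> rho"
proof -
  define s where "s = sqrt (A / E)"
  have s0: "s > 0" using A E by (simp add: s_def)
  have s2: "s^2 = A / E" using A E by (simp add: s_def)
  have "s^3 * E = s * (s^2 * E)" by (simp add: power2_eq_square power3_eq_cube)
  also have "\<dots> = s * A" using s2 E by simp
  finally have s3: "s^3 / 2 * E = s * A / 2" by simp
  have "3/2 * s * A - s^3/2 * E = s * A" using s3 by simp
  then have Sb: "S \<ge> eta * s * A" using Sl[OF s0] by simp
  define M where "M = tau * rho * eta * s * A"
  have M0: "M \<ge> 0" using tau rho eta s0 A by (simp add: M_def)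
  have "M^2 = tau^2 * rho^2 * eta^2 * s^2 * A^2" by (simp add: M_def power_mult_distrib)
  also have "\<dots> = A^3 * (eta^2 * tau^2 * rho^2) / E" using s2 E by (simp add: power2_eq_square power3_eq_cube field_simps)
  also have "\<dots> \<ge> Q^2" using key E by (simp add: pos_le_divide_eq)
  finally have "Q^2 \<le> M^2" .
  then have QM: "Q \<le> M" using M0 Q by (simp add: power2_le_iff_abs_le)
  have "tau * rho * (eta * s * A) \<le> tau * rho * S" using tau rho by (intro mult_left_mono[OF Sb]) auto
  then have "M \<le> tau * rho * S" by (simp add: M_def mult.assoc)
  then have "Q \<le> rho * (tau * S)" using QM by (simp add: algebra_simps)
  moreover have "tau * S > 0"
  proof -
    have "eta * s * A > 0" using eta s0 A by simp
    then show ?thesis using Sb tau by simp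
  qed
  ultimately show ?thesis by (simp add: divide_le_eq)
qed

lemma cube_powr23: assumes "(z::real) > 0" shows "(z powr (2/3))^3 = z^2"
proof -
  have "(z powr (2/3))^3 = z powr (of_nat 3 * (2/3))" by (rule powr_power) (use assms in simp)
  also have "\<dots> = z powr (real 2)" by simp
  also have "\<dots> = z^2" by (rule powr_realpow[OF assms])
  finally show ?thesis .
qed
lemma cube_powr13: assumes "(z::real) > 0" shows "(z powr (1/3))^3 = z"
proof -
  have "(z powr (1/3))^3 = z powr (of_nat 3 * (1/3))" by (rule powr_power) (use assms in simp)
  also have "\<dots> = z" using assms by simp
  finally show ?thesis .
qed
lemma cube_root34: "(root 3 4 :: real)^3 = 4" by (rule real_root_pow_pos2) auto




lemma cube1:
  fixes t e w r d :: real
  assumes "t > 0" "e > 0" "w > 0" "r > 0" "d > 0"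
  shows "((2 * root 3 4 / (t * e powr (2/3) * w powr (1/3))) * (d^2/r) powr (2/3) / 2)^3 * (e^2*t^2*r^2)
       = (2*d)^2 * (d^2/(t*w))"
proof -
  have "((2 * root 3 4 / (t * e powr (2/3) * w powr (1/3))) * (d^2/r) powr (2/3) / 2)^3
      = (root 3 4)^3 * ((d^2/r) powr (2/3))^3 / (t^3 * (e powr (2/3))^3 * (w powr (1/3))^3)"
    by (simp add: power_divide power_mult_distrib)
  also have "\<dots> = 4 * (d^2/r)^2 / (t^3 * e^2 * w)"
    using assms by (simp add: cube_powr23 cube_powr13 cube_root34)
  finally show ?thesis using assms by (simp add: field_simps power2_eq_square power3_eq_cube)
qed

lemma cube2:
  fixes t e w r d :: real
  assumes "t > 0" "e > 0" "w > 0" "r > 0" "d > 0"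
  shows "((2 * root 3 4 / (t * e powr (2/3) * w powr (2/3))) * (d^3/r) powr (2/3) / 2)^3 * (e^2*t^2*r^2)
       = (2 * (1 / sqrt w) * d^2)^2 * (d^2/(t*w))"
proof -
  have "((2 * root 3 4 / (t * e powr (2/3) * w powr (2/3))) * (d^3/r) powr (2/3) / 2)^3
      = (root 3 4)^3 * ((d^3/r) powr (2/3))^3 / (t^3 * (e powr (2/3))^3 * (w powr (2/3))^3)"
    by (simp add: power_divide power_mult_distrib)
  also have "\<dots> = 4 * (d^3/r)^2 / (t^3 * e^2 * w^2)"
    using assms by (simp add: cube_powr23 cube_root34)
  finally show ?thesis using assms by (simp add: field_simps power2_eq_square power3_eq_cube real_sqrt_mult[symmetric])
qed

context alg2 begin

lemma v_good_bound: assumes "good n"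
  shows "norm (v (Suc n)) * \<eta> \<le> (1 + sg) * norm (y (Suc n) - x n)^2"
proof -
  define l where "l = lam (Suc n)"
  define e where "e = norm (y (Suc n) - x n)"
  have l0: "l > 0" using lam_pos by (simp add: l_def)
  define w where "w = v (Suc n)"
  have "l *\<^sub>R w = (l *\<^sub>R w + y (Suc n) - x n) - (y (Suc n) - x n)" by simp
  then have "norm (l *\<^sub>R w) \<le> norm (l *\<^sub>R w + y (Suc n) - x n) + e"
    by (metis e_def norm_triangle_ineq4)
  also have "\<dots> \<le> sg * e + e" using hpe_err[OF assms] by (simp add: l_def e_def w_def)
  finally have a0: "norm (l *\<^sub>R w) \<le> sg * e + e" .
  have "norm (l *\<^sub>R w) = l * norm w" using l0 by simp
  then have "l * norm w \<le> sg * e + e" using a0 by linarith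
  then have a: "l * norm (v (Suc n)) \<le> (1 + sg) * e" by (simp add: w_def distrib_right add.commute)
  have b: "l * e \<ge> \<eta>" using assms by (simp add: l_def e_def)
  have "norm (v (Suc n)) * \<eta> \<le> norm (v (Suc n)) * (l * e)" using b by (intro mult_left_mono) auto
  also have "\<dots> = (l * norm (v (Suc n))) * e" by simp
  also have "\<dots> \<le> ((1 + sg) * e) * e" using a by (intro mult_right_mono) (auto simp: e_def)
  finally show ?thesis by (simp add: e_def power2_eq_square)
qed

lemma count_nat:
  fixes \<rho> :: real
  assumes vr: "\<forall>j\<in>{1..M}. norm (v j) > \<rho>" and rho: "\<rho> > 0"
  shows "M \<le> 2 * A M + nat \<lceil>1 / (2 * tau) * log_plus (Lam / ((lam 1)^2 * \<rho>))\<rceil>"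
proof -
  have c: "int M - 2 * int (A M) \<le> \<lceil>log_plus (Lam / ((lam 1)^2 * \<rho>)) / (2 * tau)\<rceil>"
    by (rule count_bound[OF vr rho order_refl])
  have "1 / (2 * tau) * log_plus (Lam / ((lam 1)^2 * \<rho>)) = log_plus (Lam / ((lam 1)^2 * \<rho>)) / (2 * tau)" by simp
  then show ?thesis using c by linarith
qed

lemma d0_pos: assumes "closed C" "sol_set F C \<noteq> {}" shows "infdist (x 0) (sol_set F C) > 0"
proof -
  have "x 0 \<notin> sol_set F C" using x0_not_sol by blast
  then show ?thesis using infdist_pos_not_in_closed[OF sol_closed[OF assms(1)] assms(2)] by blast
qed

lemma sum_e_inf: assumes "sol_set F C \<noteq> {}"
  shows "(\<Sum>j\<in>G k. norm (y j - x (j - 1))^2) \<le> (1 / (tau * (1 - sg^2))) * infdist (x 0) (sol_set F C) ^ 2"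
proof (rule inf_bound[OF assms])
  have p: "tau * (1 - sg^2) > 0" using tau_pos sg2_pos by simp
  show "0 \<le> 1 / (tau * (1 - sg^2))" using p by simp
  show "\<forall>s\<in>sol_set F C. (\<Sum>j\<in>G k. norm (y j - x (j - 1))^2) \<le> 1 / (tau * (1 - sg^2)) * dist (x 0) s ^ 2"
  proof
    fix s assume s: "s \<in> sol_set F C"
    have "tau * (1 - sg^2) * (\<Sum>j\<in>G k. norm (y j - x (j - 1))^2) \<le> norm (x 0 - s)^2" by (rule sum_e_bound[OF s])
    then show "(\<Sum>j\<in>G k. norm (y j - x (j - 1))^2) \<le> 1 / (tau * (1 - sg^2)) * dist (x 0) s ^ 2"
      using p by (simp add: dist_norm field_simps)
  qed
qed

end



lemma alg_a: fixes s e t D :: real assumes "1 - s > 0" "1 + s > 0" "e > 0" "t > 0"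
  shows "(1 + s) / e * ((1 / (t * (1 - s^2))) * D) = D / (e * t * (1 - s))"
proof -
  have eq: "1 - s^2 = (1 - s) * (1 + s)" by (simp add: power2_eq_square algebra_simps)
  have a: "(1 + s) / (t * ((1 - s) * (1 + s))) = 1 / (t * (1 - s))" using assms by simp
  have "(1 + s) / e * ((1 / (t * ((1 - s) * (1 + s)))) * D) = ((1 + s) / (t * ((1 - s) * (1 + s)))) * D / e"
    by simp
  also have "\<dots> = D / (e * t * (1 - s))" unfolding a by simp
  finally have "(1 + s) / e * ((1 / (t * ((1 - s) * (1 + s)))) * D) = D / (e * t * (1 - s))" .
  then show ?thesis by (simp only: eq)
qed

lemma alg_X: fixes s e t D r :: real assumes "1 - s > 0" "e > 0" "t > 0" "r > 0"
  shows "(2 / (t * e * (1 - s))) * (D / r) / 2 = D / (e * t * (1 - s)) / r"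
  using assms by (simp add: field_simps)

context alg2 begin

lemma main_a:
  fixes \<rho> :: real
  assumes Ccl: "closed C" and sne: "sol_set F C \<noteq> {}" and rho: "\<rho> > 0"
  shows "\<exists>k\<in>{1..nat \<lceil>(2 / (tau * \<eta> * (1 - sg))) * (infdist (x 0) (sol_set F C)^2 / \<rho>)\<rceil>
            + nat \<lceil>1 / (2 * tau) * log_plus (Lam / ((lam 1)^2 * \<rho>))\<rceil>}.
           \<nu> k \<in> normal_cone C (y k) \<and> norm (v k) \<le> \<rho>"
proof (rule ccontr)
  define d0 where "d0 = infdist (x 0) (sol_set F C)"
  define X where "X = (2 / (tau * \<eta> * (1 - sg))) * (d0^2 / \<rho>)"
  define M where "M = nat \<lceil>X\<rceil> + nat \<lceil>1 / (2 * tau) * log_plus (Lam / ((lam 1)^2 * \<rho>))\<rceil>"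
  assume "\<not> ?thesis"
  then have vr: "\<forall>j\<in>{1..M}. norm (v j) > \<rho>" using nu_nc by (force simp: M_def X_def d0_def)
  have d0: "d0 > 0" using d0_pos[OF Ccl sne] by (simp add: d0_def)
  have s1: "1 - sg > 0" using sg_lt by simp
  have X0: "X > 0" using d0 rho tau_pos eta_pos s1 by (simp add: X_def)
  have cn: "M \<le> 2 * A M + nat \<lceil>1 / (2 * tau) * log_plus (Lam / ((lam 1)^2 * \<rho>))\<rceil>" by (rule count_nat[OF vr rho])
  then have nX: "nat \<lceil>X\<rceil> \<le> 2 * A M" by (simp add: M_def)
  have "X \<le> real (nat \<lceil>X\<rceil>)" by linarith
  also have "\<dots> \<le> 2 * real (A M)" using nX by linarith
  finally have XA: "X \<le> 2 * real (A M)" .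
  have "nat \<lceil>X\<rceil> \<ge> 1" using X0 by linarith
  then have A1: "A M \<ge> 1" using nX by linarith
  then have Gne: "G M \<noteq> {}" by (metis card.empty not_one_le_zero)
  have "(\<Sum>j\<in>G M. \<rho>) < (\<Sum>j\<in>G M. norm (v j))"
  proof (rule sum_strict_mono[OF G_fin Gne])
    fix j assume "j \<in> G M" then show "\<rho> < norm (v j)" using vr G_sub by auto
  qed
  also have "\<dots> \<le> (\<Sum>j\<in>G M. (1 + sg) / \<eta> * norm (y j - x (j - 1))^2)"
  proof (rule sum_mono)
    fix j assume j: "j \<in> G M"
    obtain n where n: "j = Suc n" "good n" using G_mem[OF j] by (cases j) auto
    have "norm (v j) * \<eta> \<le> (1 + sg) * norm (y j - x (j - 1))^2" using v_good_bound[OF n(2)] n by simp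
    then show "norm (v j) \<le> (1 + sg) / \<eta> * norm (y j - x (j - 1))^2" using eta_pos by (simp add: field_simps)
  qed
  also have "\<dots> = (1 + sg) / \<eta> * (\<Sum>j\<in>G M. norm (y j - x (j - 1))^2)" by (simp add: sum_distrib_left)
  also have "\<dots> \<le> (1 + sg) / \<eta> * ((1 / (tau * (1 - sg^2))) * d0 ^ 2)"
    using sum_e_inf[OF sne, of M] sg_pos eta_pos by (intro mult_left_mono) (auto simp: d0_def)
  also have "\<dots> = d0^2 / (\<eta> * tau * (1 - sg))"
    by (rule alg_a) (use s1 sg_pos eta_pos tau_pos in auto)
  finally have "\<rho> * A M < d0^2 / (\<eta> * tau * (1 - sg))" by (simp add: mult.commute)
  moreover have "d0^2 / (\<eta> * tau * (1 - sg)) \<le> \<rho> * A M"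
  proof -
    have "X / 2 \<le> A M" using XA by simp
    moreover have "X / 2 = d0^2 / (\<eta> * tau * (1 - sg)) / \<rho>" unfolding X_def
      by (rule alg_X) (use s1 eta_pos tau_pos rho in auto)
    moreover have "\<forall>Q. Q / \<rho> \<le> real (A M) \<longrightarrow> Q \<le> \<rho> * real (A M)"
      using rho by (simp add: pos_divide_le_eq mult.commute)
    ultimately show ?thesis by metis
  qed
  ultimately show False by linarith
qed

end



context alg2 begin

lemma main_b:
  fixes \<rho> :: real
  assumes Ccl: "closed C" and sne: "sol_set F C \<noteq> {}" and rho: "\<rho> > 0"
  shows "\<exists>k\<in>{1..max (nat \<lceil>(2 * root 3 4 / (tau * \<eta> powr (2/3) * (1 - sg^2) powr (1/3)))
                          * (infdist (x 0) (sol_set F C)^2 / \<rho>) powr (2/3)\<rceil>)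
                  (nat \<lceil>(2 * root 3 4 / (tau * \<eta> powr (2/3) * (1 - sg^2) powr (2/3)))
                          * (infdist (x 0) (sol_set F C)^3 / \<rho>) powr (2/3)\<rceil>)
            + nat \<lceil>1 / (2 * tau) * log_plus (Lam / ((lam 1)^2 * \<rho>))\<rceil>}.
        (\<nu> k \<in> normal_cone C (y k) \<and> v k \<in> enlargement (FN_op F C) 0 (y k)
           \<and> max (norm (v k)) 0 \<le> \<rho>)
      \<or> (good_steps \<eta> x y lam k \<noteq> {} \<and> erg_eps F \<eta> x y \<nu> lam k \<ge> 0 \<and>
           erg_v F \<eta> x y \<nu> lam k \<in> enlargement (FN_op F C) (erg_eps F \<eta> x y \<nu> lam k) (erg_y \<eta> x y lam k) \<and>
           max (norm (erg_v F \<eta> x y \<nu> lam k)) (erg_eps F \<eta> x y \<nu> lam k) \<le> \<rho>)"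
proof (rule ccontr)
  define d0 where "d0 = infdist (x 0) (sol_set F C)"
  define w where "w = 1 - sg^2"
  define X1 where "X1 = (2 * root 3 4 / (tau * \<eta> powr (2/3) * w powr (1/3))) * (d0^2 / \<rho>) powr (2/3)"
  define X2 where "X2 = (2 * root 3 4 / (tau * \<eta> powr (2/3) * w powr (2/3))) * (d0^3 / \<rho>) powr (2/3)"
  define M where "M = max (nat \<lceil>X1\<rceil>) (nat \<lceil>X2\<rceil>) + nat \<lceil>1 / (2 * tau) * log_plus (Lam / ((lam 1)^2 * \<rho>))\<rceil>"
  assume neg: "\<not> ?thesis"
  then have neg': "\<not> (\<exists>k\<in>{1..M}.
        (\<nu> k \<in> normal_cone C (y k) \<and> v k \<in> enlargement (FN_op F C) 0 (y k)
           \<and> max (norm (v k)) 0 \<le> \<rho>)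
      \<or> (G k \<noteq> {} \<and> erg_eps F \<eta> x y \<nu> lam k \<ge> 0 \<and>
           erg_v F \<eta> x y \<nu> lam k \<in> enlargement (FN_op F C) (erg_eps F \<eta> x y \<nu> lam k) (erg_y \<eta> x y lam k) \<and>
           max (norm (erg_v F \<eta> x y \<nu> lam k)) (erg_eps F \<eta> x y \<nu> lam k) \<le> \<rho>))"
    unfolding M_def X1_def X2_def d0_def w_def by simp
  have vr: "\<forall>j\<in>{1..M}. norm (v j) > \<rho>"
  proof
    fix j assume j: "j \<in> {1..M}"
    show "norm (v j) > \<rho>"
    proof (rule ccontr)
      assume "\<not> ?thesis"
      then have "\<nu> j \<in> normal_cone C (y j) \<and> v j \<in> enlargement (FN_op F C) 0 (y j) \<and> max (norm (v j)) 0 \<le> \<rho>"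
        using nu_nc pt_enl by simp
      then show False using neg' j by blast
    qed
  qed
  have d0: "d0 > 0" using d0_pos[OF Ccl sne] by (simp add: d0_def)
  have w0: "w > 0" using sg2_pos by (simp add: w_def)
  have X1p: "X1 > 0" using d0 rho tau_pos eta_pos w0 by (simp add: X1_def)
  have X2p: "X2 > 0" using d0 rho tau_pos eta_pos w0 by (simp add: X2_def)
  have cn: "M \<le> 2 * A M + nat \<lceil>1 / (2 * tau) * log_plus (Lam / ((lam 1)^2 * \<rho>))\<rceil>" by (rule count_nat[OF vr rho])
  then have nX: "nat \<lceil>X1\<rceil> \<le> 2 * A M" "nat \<lceil>X2\<rceil> \<le> 2 * A M" by (simp_all add: M_def)
  have XA1: "X1 / 2 \<le> real (A M)" using nX(1) by linarith
  have XA2: "X2 / 2 \<le> real (A M)" using nX(2) by linarith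
  have "nat \<lceil>X1\<rceil> \<ge> 1" using X1p by linarith
  then have A1: "A M \<ge> 1" using nX by linarith
  then have Gne: "G M \<noteq> {}" by (metis card.empty not_one_le_zero)
  have M1: "M \<ge> 1" using A1 A_le[of M] by linarith
  have Sp: "S M > 0" by (rule S_pos[OF Gne])
  have notmax: "\<not> (max (norm (erg_v F \<eta> x y \<nu> lam M)) (erg_eps F \<eta> x y \<nu> lam M) \<le> \<rho>)"
    using neg' M1 erg_eps_nonneg[OF Gne] erg_enl[OF Gne] Gne by auto
  define E where "E = d0^2 / (tau * w)"
  have E0: "E > 0" using d0 tau_pos w0 by (simp add: E_def)
  have Eb: "(\<Sum>j\<in>G M. norm (y j - x (j - 1))^2) \<le> E"
    using sum_e_inf[OF sne, of M] by (simp add: E_def d0_def w_def)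
  have Sl: "S M \<ge> \<eta> * (3/2 * s * real (A M) - s^3/2 * E)" if s: "s > 0" for s
  proof -
    have "s^3/2 * (\<Sum>j\<in>G M. norm (y j - x (j - 1))^2) \<le> s^3/2 * E" using Eb s by (intro mult_left_mono) auto
    then have "\<eta> * (3/2 * s * real (A M) - s^3/2 * E) \<le> \<eta> * (3/2 * s * real (A M) - s^3/2 * (\<Sum>j\<in>G M. norm (y j - x (j - 1))^2))"
      using eta_pos by (intro mult_left_mono) auto
    also have "\<dots> \<le> S M" by (rule S_lower[OF Gne s])
    finally show ?thesis .
  qed
  have Ap: "real (A M) > 0" using A1 by simp
  have X1h: "X1 / 2 \<ge> 0" using X1p by simp
  have X2h: "X2 / 2 \<ge> 0" using X2p by simp
  have vb: "norm (erg_v F \<eta> x y \<nu> lam M) \<le> 2 * d0 / (tau * S M)"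
  proof -
    have "norm (erg_v F \<eta> x y \<nu> lam M) \<le> (2 / (tau * S M)) * infdist (x 0) (sol_set F C) ^ 1"
    proof (rule inf_bound[OF sne])
      show "0 \<le> 2 / (tau * S M)" using tau_pos Sp by simp
      show "\<forall>s\<in>sol_set F C. norm (erg_v F \<eta> x y \<nu> lam M) \<le> 2 / (tau * S M) * dist (x 0) s ^ 1"
        using erg_v_bound[OF Gne] by (simp add: dist_norm)
    qed
    then show ?thesis by (simp add: d0_def)
  qed
  have key1: "real (A M)^3 * (\<eta>^2 * tau^2 * \<rho>^2) \<ge> (2 * d0)^2 * E"
  proof -
    have "(X1 / 2)^3 \<le> real (A M)^3" using XA1 X1h by (intro power_mono) auto
    then have "(X1 / 2)^3 * (\<eta>^2 * tau^2 * \<rho>^2) \<le> real (A M)^3 * (\<eta>^2 * tau^2 * \<rho>^2)"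
      by (intro mult_right_mono) auto
    moreover have "(X1 / 2)^3 * (\<eta>^2 * tau^2 * \<rho>^2) = (2 * d0)^2 * E"
      unfolding X1_def E_def by (rule cube1) (use tau_pos eta_pos w0 rho d0 in auto)
    ultimately show ?thesis by simp
  qed
  have "2 * d0 / (tau * S M) \<le> \<rho>"
    by (rule final_b[OF Ap E0 eta_pos tau_pos rho _ Sl key1]) (use d0 in auto)
  then have v1: "norm (erg_v F \<eta> x y \<nu> lam M) \<le> \<rho>" using vb by linarith
  have eb: "erg_eps F \<eta> x y \<nu> lam M \<le> 2 * kap * d0^2 / (tau * S M)"
  proof -
    have "erg_eps F \<eta> x y \<nu> lam M \<le> (2 * kap / (tau * S M)) * infdist (x 0) (sol_set F C) ^ 2"
    proof (rule inf_bound[OF sne])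
      show "0 \<le> 2 * kap / (tau * S M)" using tau_pos Sp kap1 by simp
      show "\<forall>s\<in>sol_set F C. erg_eps F \<eta> x y \<nu> lam M \<le> 2 * kap / (tau * S M) * dist (x 0) s ^ 2"
        using erg_eps_bound[OF Gne] by (simp add: dist_norm)
    qed
    then show ?thesis by (simp add: d0_def)
  qed
  have key2: "real (A M)^3 * (\<eta>^2 * tau^2 * \<rho>^2) \<ge> (2 * kap * d0^2)^2 * E"
  proof -
    have "(X2 / 2)^3 \<le> real (A M)^3" using XA2 X2h by (intro power_mono) auto
    then have "(X2 / 2)^3 * (\<eta>^2 * tau^2 * \<rho>^2) \<le> real (A M)^3 * (\<eta>^2 * tau^2 * \<rho>^2)"
      by (intro mult_right_mono) auto
    moreover have "(X2 / 2)^3 * (\<eta>^2 * tau^2 * \<rho>^2) = (2 * (1 / sqrt w) * d0^2)^2 * E"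
      unfolding X2_def E_def by (rule cube2) (use tau_pos eta_pos w0 rho d0 in auto)
    ultimately show ?thesis by (simp add: kap_def w_def)
  qed
  have "2 * kap * d0^2 / (tau * S M) \<le> \<rho>"
    by (rule final_b[OF Ap E0 eta_pos tau_pos rho _ Sl key2]) (use d0 kap1 in auto)
  then have e1: "erg_eps F \<eta> x y \<nu> lam M \<le> \<rho>" using eb by linarith
  show False using notmax v1 e1 by simp
qed

end

theorem theorem4p9:
  fixes F :: "'a::{real_inner, complete_space} \<Rightarrow> 'a"
    and F' :: "'a \<Rightarrow> 'a \<Rightarrow>\<^sub>L 'a"
    and C :: "'a set"
    and L \<sigma>h \<theta> \<eta> \<rho> :: real
    and x y \<nu> :: "nat \<Rightarrow> 'a" and lam :: "nat \<Rightarrow> real"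
  assumes C_ne: "C \<noteq> {}" and C_closed: "closed C" and C_convex: "convex C"
    and F_mono: "\<forall>u\<in>C. \<forall>w\<in>C. inner (F u - F w) (u - w) \<ge> 0"
    and F_deriv: "\<forall>u\<in>C. (F has_derivative blinfun_apply (F' u)) (at u within C)"
    and F'_cont: "continuous_on C F'"
    and L_pos: "L > 0"
    and F'_lip: "\<forall>u\<in>C. \<forall>w\<in>C. norm (F' u - F' w) \<le> L * norm (u - w)"
    and sol_ne: "sol_set F C \<noteq> {}"
    and sh: "0 \<le> \<sigma>h" "\<sigma>h < 1/2"
    and th: "0 < \<theta>" "\<theta> < (1 - \<sigma>h) * (1 - 2 * \<sigma>h)"
    and eta: "\<eta> > 2 * theta_hat \<sigma>h \<theta> / L"
    and run: "alg2_run F F' C L \<sigma>h \<theta> \<eta> x y \<nu> lam"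
    and rho: "\<rho> > 0"
  shows
   "(let d0 = infdist (x 0) (sol_set F C);
         \<sigma> = 2 * theta_hat \<sigma>h \<theta> / (\<eta> * L);
         \<tau> = tau_param \<sigma>h \<theta> \<eta> L;
         logterm = nat \<lceil>1 / (2 * \<tau>) * log_plus ((\<eta> + 2 * theta_hat \<sigma>h \<theta> / L) / ((lam 1)^2 * \<rho>))\<rceil>;
         Ma = nat \<lceil>(2 / (\<tau> * \<eta> * (1 - \<sigma>))) * (d0^2 / \<rho>)\<rceil> + logterm;
         Mb = max (nat \<lceil>(2 * root 3 4 / (\<tau> * \<eta> powr (2/3) * (1 - \<sigma>^2) powr (1/3)))
                          * (d0^2 / \<rho>) powr (2/3)\<rceil>)
                  (nat \<lceil>(2 * root 3 4 / (\<tau> * \<eta> powr (2/3) * (1 - \<sigma>^2) powr (2/3)))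
                          * (d0^3 / \<rho>) powr (2/3)\<rceil>) + logterm
     in
     (\<exists>k\<in>{1..Ma}. \<nu> k \<in> normal_cone C (y k) \<and> norm (F (y k) + \<nu> k) \<le> \<rho>) \<and>
     (\<exists>k\<in>{1..Mb}.
        (\<nu> k \<in> normal_cone C (y k) \<and> F (y k) + \<nu> k \<in> enlargement (FN_op F C) 0 (y k)
           \<and> max (norm (F (y k) + \<nu> k)) 0 \<le> \<rho>)
      \<or> (good_steps \<eta> x y lam k \<noteq> {} \<and> erg_eps F \<eta> x y \<nu> lam k \<ge> 0 \<and>
           erg_v F \<eta> x y \<nu> lam k \<in> enlargement (FN_op F C) (erg_eps F \<eta> x y \<nu> lam k) (erg_y \<eta> x y lam k) \<and>
           max (norm (erg_v F \<eta> x y \<nu> lam k)) (erg_eps F \<eta> x y \<nu> lam k) \<le> \<rho>)))"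
proof -
  interpret alg2 F F' C L \<sigma>h \<theta> \<eta> x y \<nu> lam
    by (unfold_locales) (use C_convex F_mono F_deriv L_pos F'_lip sh th eta run in auto)
  show ?thesis unfolding Let_def
    by (intro conjI main_a[OF C_closed sol_ne rho] main_b[OF C_closed sol_ne rho])
qed

end
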